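(* Let $n_1,\dots,n_p\ge0$, let $W=\mathcal{H}_{n_1}(\mathbb{R}^3)\oplus\dots\oplus\mathcal{H}_{n_p}(\mathbb{R}^3)$ as a real $\mathrm{SO}(3,\mathbb{R})$-representation, and let $W^{\mathbb{C}}=\mathcal{H}_{n_1}(\mathbb{C}^3)\oplus\dots\oplus\mathcal{H}_{n_p}(\mathbb{C}^3)$ be its complexification, a representation of $\mathrm{SO}(3,\mathbb{C})$. Let $\{J_1,\dots,J_N\}$ be a minimal integrity basis for the algebra $\mathbb{C}[W^{\mathbb{C}}]^{\mathrm{SO}(3,\mathbb{C})}$ such that each $J_k$ restricted to $W$ is a real polynomial, i.e. $J_k|_W\in\mathbb{R}[W]$. Then $\{J_1|_W,\dots,J_N|_W\}$ is a minimal integrity basis for the real invariant algebra $\mathbb{R}[W]^{\mathrm{SO}(3,\mathbb{R})}$.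
   Context: $\mathcal{H}_n(\mathbb{K}^3)$ is the space of harmonic (vanishing Laplacian) homogeneous polynomials of degree $n$ in three variables with coefficients in $\mathbb{K}$; the rotation groups act by $(g\cdot\mathbf{p})(\mathbf{v})=\mathbf{p}(g^{-1}\mathbf{v})$. An integrity basis of an invariant algebra is a finite set of homogeneous invariant polynomials generating it as an algebra; it is minimal if none of its elements is a polynomial in the others. *)

theory Defs
  imports "HOL-Analysis.Analysis"
begin

text \<open>Homogeneous harmonic polynomials of degree n in three variables, given by
  coefficient families c(a,b,e) of the monomial x^a y^b z^e.\<close>

definition harm_coeffs :: "nat \<Rightarrow> (nat \<times> nat \<times> nat \<Rightarrow> 'a::field) \<Rightarrow> bool" where
  "harm_coeffs n c \<longleftrightarrow>
     (\<forall>a b e. a + b + e \<noteq> n \<longrightarrow> c (a, b, e) = 0) \<and>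
     (\<forall>a b e. of_nat ((a + 2) * (a + 1)) * c (a + 2, b, e)
            + of_nat ((b + 2) * (b + 1)) * c (a, b + 2, e)
            + of_nat ((e + 2) * (e + 1)) * c (a, b, e + 2) = 0)"

definition hom_eval :: "nat \<Rightarrow> (nat \<times> nat \<times> nat \<Rightarrow> 'a::field) \<Rightarrow> 'a ^ 3 \<Rightarrow> 'a" where
  "hom_eval n c v = (\<Sum>a\<le>n. \<Sum>b\<le>n. \<Sum>e\<le>n.
       c (a, b, e) * (v $ 1) ^ a * (v $ 2) ^ b * (v $ 3) ^ e)"

definition Harm :: "nat \<Rightarrow> ('a::field ^ 3 \<Rightarrow> 'a) set" where
  "Harm n = {f. \<exists>c. harm_coeffs n c \<and> f = hom_eval n c}"

text \<open>The direct sum W = H_{n_1} + ... + H_{n_p} for ns = [n_1,...,n_p];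
  an element is a family of components indexed by i < p (zero beyond).\<close>
definition Wsp :: "nat list \<Rightarrow> (nat \<Rightarrow> 'a::field ^ 3 \<Rightarrow> 'a) set" where
  "Wsp ns = {w. (\<forall>i < length ns. w i \<in> Harm (ns ! i)) \<and> (\<forall>i \<ge> length ns. w i = (\<lambda>_. 0))}"

definition wscale :: "'a::field \<Rightarrow> (nat \<Rightarrow> 'a ^ 3 \<Rightarrow> 'a) \<Rightarrow> (nat \<Rightarrow> 'a ^ 3 \<Rightarrow> 'a)" where
  "wscale t w = (\<lambda>i v. t * w i v)"

definition wadd :: "(nat \<Rightarrow> 'a::field ^ 3 \<Rightarrow> 'a) \<Rightarrow> (nat \<Rightarrow> 'a ^ 3 \<Rightarrow> 'a) \<Rightarrow> (nat \<Rightarrow> 'a ^ 3 \<Rightarrow> 'a)" where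
  "wadd w u = (\<lambda>i v. w i v + u i v)"

definition SO3 :: "('a::field ^ 3 ^ 3) set" where
  "SO3 = {g. transpose g ** g = mat 1 \<and> det g = 1}"

definition wact :: "'a::field ^ 3 ^ 3 \<Rightarrow> (nat \<Rightarrow> 'a ^ 3 \<Rightarrow> 'a) \<Rightarrow> (nat \<Rightarrow> 'a ^ 3 \<Rightarrow> 'a)" where
  "wact g w = (\<lambda>i v. w i (matrix_inv g *v v))"

text \<open>Polynomial functions on a vector space V (given as a carrier): the algebra
  generated by constants and linear functionals on V.\<close>
definition lin_on :: "'w set \<Rightarrow> ('a::field \<Rightarrow> 'w \<Rightarrow> 'w) \<Rightarrow> ('w \<Rightarrow> 'w \<Rightarrow> 'w) \<Rightarrow> ('w \<Rightarrow> 'a) \<Rightarrow> bool" where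
  "lin_on V sc ad l \<longleftrightarrow> (\<forall>x\<in>V. \<forall>y\<in>V. \<forall>a b. l (ad (sc a x) (sc b y)) = a * l x + b * l y)"

inductive_set polyfuns :: "'w set \<Rightarrow> ('a::field \<Rightarrow> 'w \<Rightarrow> 'w) \<Rightarrow> ('w \<Rightarrow> 'w \<Rightarrow> 'w) \<Rightarrow> ('w \<Rightarrow> 'a) set"
  for V sc ad where
  pf_const: "(\<lambda>_. c) \<in> polyfuns V sc ad"
| pf_lin: "lin_on V sc ad l \<Longrightarrow> l \<in> polyfuns V sc ad"
| pf_add: "f \<in> polyfuns V sc ad \<Longrightarrow> g \<in> polyfuns V sc ad \<Longrightarrow> (\<lambda>x. f x + g x) \<in> polyfuns V sc ad"
| pf_mult: "f \<in> polyfuns V sc ad \<Longrightarrow> g \<in> polyfuns V sc ad \<Longrightarrow> (\<lambda>x. f x * g x) \<in> polyfuns V sc ad"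

inductive_set alg_gen :: "('w \<Rightarrow> 'a::comm_ring_1) set \<Rightarrow> ('w \<Rightarrow> 'a) set" for S where
  ag_const: "(\<lambda>_. c) \<in> alg_gen S"
| ag_gen: "f \<in> S \<Longrightarrow> f \<in> alg_gen S"
| ag_add: "f \<in> alg_gen S \<Longrightarrow> g \<in> alg_gen S \<Longrightarrow> (\<lambda>x. f x + g x) \<in> alg_gen S"
| ag_mult: "f \<in> alg_gen S \<Longrightarrow> g \<in> alg_gen S \<Longrightarrow> (\<lambda>x. f x * g x) \<in> alg_gen S"

text \<open>Everything is considered as functions on the carrier W only.\<close>
definition in_on :: "'w set \<Rightarrow> ('w \<Rightarrow> 'a) \<Rightarrow> ('w \<Rightarrow> 'a) set \<Rightarrow> bool" where
  "in_on V F A \<longleftrightarrow> (\<exists>G\<in>A. \<forall>w\<in>V. F w = G w)"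

definition poly_W :: "nat list \<Rightarrow> ((nat \<Rightarrow> 'a::field ^ 3 \<Rightarrow> 'a) \<Rightarrow> 'a) \<Rightarrow> bool" where
  "poly_W ns F \<longleftrightarrow> in_on (Wsp ns) F (polyfuns (Wsp ns) wscale wadd)"

definition inv_W :: "nat list \<Rightarrow> ((nat \<Rightarrow> 'a::field ^ 3 \<Rightarrow> 'a) \<Rightarrow> 'a) \<Rightarrow> bool" where
  "inv_W ns F \<longleftrightarrow> poly_W ns F \<and> (\<forall>g\<in>SO3. \<forall>w\<in>Wsp ns. F (wact g w) = F w)"

definition homog_W :: "nat list \<Rightarrow> ((nat \<Rightarrow> 'a::field ^ 3 \<Rightarrow> 'a) \<Rightarrow> 'a) \<Rightarrow> bool" where
  "homog_W ns F \<longleftrightarrow> (\<exists>d::nat. \<forall>t. \<forall>w\<in>Wsp ns. F (wscale t w) = t ^ d * F w)"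

definition integrity_basis :: "nat list \<Rightarrow> nat \<Rightarrow> (nat \<Rightarrow> (nat \<Rightarrow> 'a::field ^ 3 \<Rightarrow> 'a) \<Rightarrow> 'a) \<Rightarrow> bool" where
  "integrity_basis ns N J \<longleftrightarrow>
     (\<forall>k<N. inv_W ns (J k) \<and> homog_W ns (J k)) \<and>
     (\<forall>F. inv_W ns F \<longrightarrow> in_on (Wsp ns) F (alg_gen (J ` {..<N})))"

definition minimal_integrity_basis :: "nat list \<Rightarrow> nat \<Rightarrow> (nat \<Rightarrow> (nat \<Rightarrow> 'a::field ^ 3 \<Rightarrow> 'a) \<Rightarrow> 'a) \<Rightarrow> bool" where
  "minimal_integrity_basis ns N J \<longleftrightarrow> integrity_basis ns N J \<and>
     (\<forall>k<N. \<not> in_on (Wsp ns) (J k) (alg_gen (J ` ({..<N} - {k}))))"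

text \<open>Complexification H_n(R^3) \<rightarrow> H_n(C^3): the harmonic complex polynomial with
  the same (real) coefficients, i.e. extending f.\<close>
definition complexify_H :: "nat \<Rightarrow> (real ^ 3 \<Rightarrow> real) \<Rightarrow> (complex ^ 3 \<Rightarrow> complex)" where
  "complexify_H n f = (THE h. h \<in> Harm n \<and> (\<forall>v. h (\<chi> j. complex_of_real (v $ j)) = complex_of_real (f v)))"

definition complexify_W :: "nat list \<Rightarrow> (nat \<Rightarrow> real ^ 3 \<Rightarrow> real) \<Rightarrow> (nat \<Rightarrow> complex ^ 3 \<Rightarrow> complex)" where
  "complexify_W ns w = (\<lambda>i. if i < length ns then complexify_H (ns ! i) (w i) else (\<lambda>_. 0))"

end

theory Submission
  imports Defs
begin


lemma box1_unique:
  fixes f :: "nat \<Rightarrow> 'a::idom"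
  assumes inf: "infinite S" and z: "\<forall>x\<in>S. (\<Sum>a\<le>N. f a * x^a) = 0"
  shows "\<forall>a\<le>N. f a = 0"
proof -
  define p where "p = (\<Sum>a\<le>N. monom (f a) a)"
  have pp: "poly p x = (\<Sum>a\<le>N. f a * x^a)" for x
    by (simp add: p_def poly_sum poly_monom)
  have cp: "coeff p a = f a" if "a \<le> N" for a
    using that by (simp add: p_def coeff_sum)
  have "p = 0"
  proof (rule ccontr)
    assume "p \<noteq> 0"
    hence "finite {x. poly p x = 0}" by (rule poly_roots_finite)
    moreover have "S \<subseteq> {x. poly p x = 0}" using z pp by auto
    ultimately show False using inf finite_subset by blast
  qed
  thus ?thesis using cp by auto
qed

lemma box3_unique:
  fixes d :: "nat \<times> nat \<times> nat \<Rightarrow> 'a::idom"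
  assumes inf: "infinite S"
    and z: "\<forall>x\<in>S. \<forall>y\<in>S. \<forall>z\<in>S. (\<Sum>a\<le>N. \<Sum>b\<le>N. \<Sum>e\<le>N. d (a,b,e) * x^a * y^b * z^e) = 0"
  shows "a \<le> N \<Longrightarrow> b \<le> N \<Longrightarrow> e \<le> N \<Longrightarrow> d (a,b,e) = 0"
proof -
  have s1: "\<forall>y\<in>S. \<forall>z\<in>S. \<forall>a\<le>N. (\<Sum>b\<le>N. \<Sum>e\<le>N. d (a,b,e) * y^b * z^e) = 0"
  proof (intro ballI)
    fix y z assume yz: "y \<in> S" "z \<in> S"
    have "\<forall>x\<in>S. (\<Sum>a\<le>N. (\<Sum>b\<le>N. \<Sum>e\<le>N. d (a,b,e) * y^b * z^e) * x^a) = 0"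
    proof
      fix x assume "x \<in> S"
      hence "(\<Sum>a\<le>N. \<Sum>b\<le>N. \<Sum>e\<le>N. d (a,b,e) * x^a * y^b * z^e) = 0" using z yz by blast
      thus "(\<Sum>a\<le>N. (\<Sum>b\<le>N. \<Sum>e\<le>N. d (a,b,e) * y^b * z^e) * x^a) = 0"
        by (simp add: sum_distrib_right sum_distrib_left mult_ac)
    qed
    from box1_unique[OF inf this] show "\<forall>a\<le>N. (\<Sum>b\<le>N. \<Sum>e\<le>N. d (a,b,e) * y^b * z^e) = 0" .
  qed
  have s2: "\<forall>z\<in>S. \<forall>a\<le>N. \<forall>b\<le>N. (\<Sum>e\<le>N. d (a,b,e) * z^e) = 0"
  proof (intro ballI allI impI)
    fix z a assume "z \<in> S" "a \<le> N"
    have "\<forall>y\<in>S. (\<Sum>b\<le>N. (\<Sum>e\<le>N. d (a,b,e) * z^e) * y^b) = 0"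
    proof
      fix y assume "y \<in> S"
      hence "(\<Sum>b\<le>N. \<Sum>e\<le>N. d (a,b,e) * y^b * z^e) = 0" using s1 `z \<in> S` `a \<le> N` by blast
      thus "(\<Sum>b\<le>N. (\<Sum>e\<le>N. d (a,b,e) * z^e) * y^b) = 0"
        by (simp add: sum_distrib_right sum_distrib_left mult_ac)
    qed
    from box1_unique[OF inf this] show "\<And>b. b \<le> N \<Longrightarrow> (\<Sum>e\<le>N. d (a,b,e) * z^e) = 0" by blast
  qed
  assume abe: "a \<le> N" "b \<le> N" "e \<le> N"
  have "\<forall>z\<in>S. (\<Sum>e\<le>N. d (a,b,e) * z^e) = 0" using s2 abe by blast
  from box1_unique[OF inf this] abe show "d (a,b,e) = 0" by blast
qed

lemma hom_eval_unique:
  fixes d :: "nat \<times> nat \<times> nat \<Rightarrow> 'a::field"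
  assumes inf: "infinite S"
    and z: "\<And>v. (\<forall>i. v $ i \<in> S) \<Longrightarrow> hom_eval N d v = 0"
  shows "a \<le> N \<Longrightarrow> b \<le> N \<Longrightarrow> e \<le> N \<Longrightarrow> d (a,b,e) = 0"
proof (rule box3_unique[OF inf])
  show "\<forall>x\<in>S. \<forall>y\<in>S. \<forall>z\<in>S. (\<Sum>a\<le>N. \<Sum>b\<le>N. \<Sum>e\<le>N. d (a,b,e) * x^a * y^b * z^e) = 0"
  proof (intro ballI)
    fix x y w assume xyz: "x \<in> S" "y \<in> S" "w \<in> S"
    define v :: "'a^3" where "v = vector [x,y,w]"
    have v: "v$1 = x" "v$2 = y" "v$3 = w" by (simp_all add: v_def)
    have "\<forall>i. v $ i \<in> S" using xyz v by (metis exhaust_3)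
    from z[OF this] show "(\<Sum>a\<le>N. \<Sum>b\<le>N. \<Sum>e\<le>N. d (a,b,e) * x^a * y^b * w^e) = 0"
      by (simp add: hom_eval_def v)
  qed
qed

inductive_set Pgen :: "('a::field ^ 3 \<Rightarrow> 'a) set" where
  pg_const: "(\<lambda>_. c) \<in> Pgen"
| pg_coord: "(\<lambda>v. v $ k) \<in> Pgen"
| pg_add: "f \<in> Pgen \<Longrightarrow> g \<in> Pgen \<Longrightarrow> (\<lambda>v. f v + g v) \<in> Pgen"
| pg_mult: "f \<in> Pgen \<Longrightarrow> g \<in> Pgen \<Longrightarrow> (\<lambda>v. f v * g v) \<in> Pgen"

lemma pg_sum: "finite A \<Longrightarrow> (\<And>i. i \<in> A \<Longrightarrow> f i \<in> Pgen) \<Longrightarrow> (\<lambda>v. \<Sum>i\<in>A. f i v) \<in> Pgen"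
proof (induction A rule: finite_induct)
  case empty then show ?case using pg_const[of 0] by simp
next
  case (insert x F) then show ?case using pg_add[of "f x" "\<lambda>v. \<Sum>i\<in>F. f i v"] by simp
qed

lemma pg_pow: "f \<in> Pgen \<Longrightarrow> (\<lambda>v. f v ^ n) \<in> Pgen"
proof (induction n)
  case 0 then show ?case using pg_const[of 1] by simp
next
  case (Suc n) then show ?case using pg_mult[of f "\<lambda>v. f v ^ n"] by simp
qed

lemma pg_hom_eval: "hom_eval N c \<in> Pgen"
proof -
  have "(\<lambda>v. \<Sum>a\<le>N. \<Sum>b\<le>N. \<Sum>e\<le>N. c (a, b, e) * (v $ 1) ^ a * (v $ 2) ^ b * (v $ 3) ^ e) \<in> Pgen"
    by (intro pg_sum pg_mult pg_pow pg_const pg_coord) auto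
  thus ?thesis by (simp add: hom_eval_def[abs_def])
qed

lemma pg_linsub: fixes A :: "'a::field^3^3" shows "f \<in> Pgen \<Longrightarrow> (\<lambda>v. f (A *v v)) \<in> Pgen"
proof (induction rule: Pgen.induct)
  case (pg_coord k)
  have "(\<lambda>v. \<Sum>j\<in>UNIV. A$k$j * v$j) \<in> Pgen"
    by (intro pg_sum Pgen.pg_mult Pgen.pg_const Pgen.pg_coord) auto
  then show ?case by (simp add: matrix_vector_mult_def)
qed (auto intro: Pgen.intros)

lemma pg_line: "f \<in> Pgen \<Longrightarrow> \<exists>p. \<forall>t. f (v + t *s w) = poly p t"
proof (induction rule: Pgen.induct)
  case (pg_const c) then show ?case by (rule exI[of _ "[:c:]"]) simp
next
  case (pg_coord k) then show ?case by (rule exI[of _ "[:v$k, w$k:]"]) (simp add: algebra_simps)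
next
  case (pg_add f g)
  then obtain p q where "\<forall>t. f (v + t *s w) = poly p t" "\<forall>t. g (v + t *s w) = poly q t" by blast
  then show ?case by (intro exI[of _ "p+q"]) simp
next
  case (pg_mult f g)
  then obtain p q where "\<forall>t. f (v + t *s w) = poly p t" "\<forall>t. g (v + t *s w) = poly q t" by blast
  then show ?case by (intro exI[of _ "p*q"]) simp
qed

definition lp :: "('a::field_char_0 ^ 3 \<Rightarrow> 'a) \<Rightarrow> 'a^3 \<Rightarrow> 'a^3 \<Rightarrow> 'a poly" where
  "lp f v w = (THE p. \<forall>t. f (v + t *s w) = poly p t)"

lemma lp_unique: "\<forall>t. f (v + t *s w) = poly p t \<Longrightarrow> lp f v w = p"
  unfolding lp_def
proof (rule the_equality)
  fix q assume "\<forall>t. f (v + t *s w) = poly (q::'a::field_char_0 poly) t" "\<forall>t. f (v + t *s w) = poly p t"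
  hence "poly q = poly p" by auto
  thus "q = p" by (simp add: poly_eq_poly_eq_iff)
qed

lemma lp_eq: assumes "f \<in> Pgen" shows "f (v + t *s w) = poly (lp f v w) t"
proof -
  obtain p where p: "\<forall>t. f (v + t *s w) = poly p t" using pg_line[OF assms] by blast
  show ?thesis using p lp_unique[OF p] by simp
qed

definition Df :: "('a::field_char_0 ^ 3 \<Rightarrow> 'a) \<Rightarrow> 'a^3 \<Rightarrow> 'a^3 \<Rightarrow> 'a" where
  "Df f v w = coeff (lp f v w) 1"

lemma lp_0: "f \<in> Pgen \<Longrightarrow> coeff (lp f v w) 0 = f v"
  using lp_eq[of f v 0 w] by (simp add: poly_0_coeff_0)

lemma lp_add: "f \<in> Pgen \<Longrightarrow> g \<in> Pgen \<Longrightarrow> lp (\<lambda>v. f v + g v) v w = lp f v w + lp g v w"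
  by (rule lp_unique) (simp add: lp_eq)

lemma lp_mult: "f \<in> Pgen \<Longrightarrow> g \<in> Pgen \<Longrightarrow> lp (\<lambda>v. f v * g v) v w = lp f v w * lp g v w"
  by (rule lp_unique) (simp add: lp_eq)

lemma lp_const: "lp (\<lambda>v. c) v w = [:c:]"
  by (rule lp_unique) simp

lemma lp_coord: "lp (\<lambda>v. v$k) v w = [:v$k, w$k:]"
  by (rule lp_unique) (simp add: algebra_simps)

lemma coeff_mult_1: "coeff (p * q) (Suc 0) = coeff p 0 * coeff q (Suc 0) + coeff p (Suc 0) * coeff q 0"
  by (simp add: coeff_mult atMost_Suc add.commute)

lemma Df_const[simp]: "Df (\<lambda>v. c) v w = 0"
  by (simp add: Df_def lp_const)

lemma Df_coord[simp]: "Df (\<lambda>v. v$k) v w = w$k"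
  by (simp add: Df_def lp_coord)

lemma Df_add: "f \<in> Pgen \<Longrightarrow> g \<in> Pgen \<Longrightarrow> Df (\<lambda>v. f v + g v) v w = Df f v w + Df g v w"
  by (simp add: Df_def lp_add)

lemma Df_mult: "f \<in> Pgen \<Longrightarrow> g \<in> Pgen \<Longrightarrow> Df (\<lambda>v. f v * g v) v w = Df f v w * g v + f v * Df g v w"
  by (simp add: Df_def lp_mult coeff_mult_1 lp_0 mult_ac)

lemma Df_cmult: "f \<in> Pgen \<Longrightarrow> Df (\<lambda>v. c * f v) v w = c * Df f v w"
  using Df_mult[OF pg_const[of c], of f] by simp

lemma Df_sum: "finite A \<Longrightarrow> (\<And>i. i \<in> A \<Longrightarrow> f i \<in> Pgen) \<Longrightarrow> Df (\<lambda>v. \<Sum>i\<in>A. f i v) u w = (\<Sum>i\<in>A. Df (f i) u w)"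
proof (induction A rule: finite_induct)
  case empty then show ?case by simp
next
  case (insert x F)
  have "Df (\<lambda>v. \<Sum>i\<in>insert x F. f i v) u w = Df (\<lambda>v. f x v + (\<Sum>i\<in>F. f i v)) u w"
    using insert by simp
  also have "\<dots> = Df (f x) u w + Df (\<lambda>v. \<Sum>i\<in>F. f i v) u w"
    using insert by (intro Df_add pg_sum) auto
  finally show ?case using insert by simp
qed

lemma Df_pg: "f \<in> Pgen \<Longrightarrow> (\<lambda>u. Df f u w) \<in> Pgen"
proof (induction rule: Pgen.induct)
  case (pg_add f g) then show ?case by (simp add: Df_add Pgen.pg_add)
next
  case (pg_mult f g) then show ?case by (simp add: Df_mult Pgen.pg_add Pgen.pg_mult)
qed (auto intro: Pgen.intros)

lemma Df_lin: "f \<in> Pgen \<Longrightarrow> Df f v w = (\<Sum>k\<in>UNIV. w$k * Df f v (axis k 1))"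
proof (induction rule: Pgen.induct)
  case (pg_coord j)
  have "(\<Sum>k\<in>UNIV. w$k * (axis k 1 :: 'a^3) $ j) = (\<Sum>k\<in>UNIV. if k = j then w$k else 0)"
    by (rule sum.cong) (auto simp: axis_def)
  hence "(\<Sum>k\<in>UNIV. w$k * (axis k 1 :: 'a^3) $ j) = w $ j" by simp
  then show ?case by simp
next
  case (pg_add f g) then show ?case by (simp add: Df_add sum.distrib algebra_simps)
next
  case (pg_mult f g) then show ?case
    by (simp add: Df_mult sum.distrib algebra_simps sum_distrib_left sum_distrib_right)
qed simp

lemma mv_smult: fixes A :: "'a::field^'n^'m" shows "A *v (t *s w) = t *s (A *v w)"
  by (simp add: vec_eq_iff matrix_vector_mult_def sum_distrib_left mult_ac)

lemma mv_add: fixes A :: "'a::field^'n^'m" shows "A *v (u + w) = A *v u + A *v w"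
  by (simp add: vec_eq_iff matrix_vector_mult_def sum.distrib algebra_simps)

lemma Df_linsub: fixes A :: "'a::field_char_0^3^3" shows "f \<in> Pgen \<Longrightarrow> Df (\<lambda>v. f (A *v v)) u w = Df f (A *v u) (A *v w)"
proof -
  assume f: "f \<in> Pgen"
  have "lp (\<lambda>v. f (A *v v)) u w = lp f (A *v u) (A *v w)"
    by (rule lp_unique) (simp add: lp_eq[OF f, symmetric] mv_add mv_smult)
  thus ?thesis by (simp add: Df_def)
qed


lemma Df_pow_coord: "Df (\<lambda>v. v$j ^ a) u w = of_nat a * u$j^(a - 1) * w$j"
proof (induction a)
  case 0 then show ?case by simp
next
  case (Suc a)
  have "Df (\<lambda>v. v$j ^ Suc a) u w = Df (\<lambda>v. v$j * v$j ^ a) u w" by simp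
  also have "\<dots> = w$j * u$j^a + u$j * Df (\<lambda>v. v$j ^ a) u w"
    by (subst Df_mult) (auto intro: pg_pow Pgen.intros)
  also have "\<dots> = of_nat (Suc a) * u$j^a * w$j"
    using Suc by (cases a) (auto simp: algebra_simps)
  finally show ?case by simp
qed

definition boxed :: "nat \<Rightarrow> (nat \<times> nat \<times> nat \<Rightarrow> 'a::zero) \<Rightarrow> bool" where
  "boxed N c \<longleftrightarrow> (\<forall>a b e. c (a,b,e) \<noteq> 0 \<longrightarrow> a \<le> N \<and> b \<le> N \<and> e \<le> N)"

lemma boxed_zero: "boxed N c \<Longrightarrow> N < a \<or> N < b \<or> N < e \<Longrightarrow> c(a,b,e) = 0"
  unfolding boxed_def by force

definition mono3 :: "nat \<Rightarrow> nat \<Rightarrow> nat \<Rightarrow> 'a::field ^3 \<Rightarrow> 'a" where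
  "mono3 a b e v = v$1^a * v$2^b * v$3^e"

lemma mono3_pg: "mono3 a b e \<in> Pgen"
  unfolding mono3_def[abs_def] by (auto intro!: Pgen.pg_mult pg_pow Pgen.pg_coord)

lemma hom_eval_mono3: "hom_eval N c = (\<lambda>v. \<Sum>a\<le>N. \<Sum>b\<le>N. \<Sum>e\<le>N. c(a,b,e) * mono3 a b e v)"
  by (simp add: hom_eval_def[abs_def] mono3_def mult_ac)

lemma Df_mono3: "Df (mono3 a b e) u w =
   of_nat a * u$1^(a-1) * u$2^b * u$3^e * w$1 + of_nat b * u$1^a * u$2^(b-1) * u$3^e * w$2
   + of_nat e * u$1^a * u$2^b * u$3^(e-1) * w$3"
proof -
  have "Df (mono3 a b e) u w = Df (\<lambda>v. (v$1^a * v$2^b) * v$3^e) u w"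
    by (simp add: mono3_def[abs_def])
  also have "\<dots> = Df (\<lambda>v. v$1^a * v$2^b) u w * u$3^e + (u$1^a * u$2^b) * Df (\<lambda>v. v$3^e) u w"
    by (rule Df_mult) (auto intro!: Pgen.pg_mult pg_pow Pgen.pg_coord)
  also have "Df (\<lambda>v. v$1^a * v$2^b) u w = Df (\<lambda>v. v$1^a) u w * u$2^b + u$1^a * Df (\<lambda>v. v$2^b) u w"
    by (rule Df_mult) (auto intro: pg_pow Pgen.intros)
  finally show ?thesis by (simp add: Df_pow_coord algebra_simps)
qed

lemma Df_hom_eval: "Df (hom_eval N c) u w = (\<Sum>a\<le>N. \<Sum>b\<le>N. \<Sum>e\<le>N. c(a,b,e) * Df (mono3 a b e) u w)"
proof -
  have "Df (hom_eval N c) u w = (\<Sum>a\<le>N. Df (\<lambda>v. \<Sum>b\<le>N. \<Sum>e\<le>N. c(a,b,e) * mono3 a b e v) u w)"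
    unfolding hom_eval_mono3
    by (rule Df_sum) (auto intro!: pg_sum Pgen.intros mono3_pg)
  also have "\<dots> = (\<Sum>a\<le>N. \<Sum>b\<le>N. Df (\<lambda>v. \<Sum>e\<le>N. c(a,b,e) * mono3 a b e v) u w)"
    by (intro sum.cong refl Df_sum) (auto intro!: pg_sum Pgen.intros mono3_pg)
  also have "\<dots> = (\<Sum>a\<le>N. \<Sum>b\<le>N. \<Sum>e\<le>N. Df (\<lambda>v. c(a,b,e) * mono3 a b e v) u w)"
    by (intro sum.cong refl Df_sum) (auto intro!: pg_sum Pgen.intros mono3_pg)
  also have "\<dots> = (\<Sum>a\<le>N. \<Sum>b\<le>N. \<Sum>e\<le>N. c(a,b,e) * Df (mono3 a b e) u w)"
    by (intro sum.cong refl Df_cmult mono3_pg)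
  finally show ?thesis .
qed

lemma sum_shift_deriv:
  fixes G :: "nat \<Rightarrow> 'a::field"
  shows "(\<Sum>a\<le>N. of_nat a * x^(a-1) * G a) = (\<Sum>a<N. of_nat (a+1) * x^a * G (a+1))"
proof (induction N)
  case 0 then show ?case by simp
next
  case (Suc N) then show ?case by (simp add: atMost_Suc lessThan_Suc add.commute)
qed

lemma sum_shift_deriv':
  fixes G :: "nat \<Rightarrow> 'a::field"
  assumes "G (Suc N) = 0"
  shows "(\<Sum>a\<le>N. of_nat a * x^(a-1) * G a) = (\<Sum>a\<le>N. of_nat (a+1) * x^a * G (a+1))"
  unfolding sum_shift_deriv using assms by (simp add: lessThan_Suc_atMost[symmetric])

definition d1 :: "(nat \<times> nat \<times> nat \<Rightarrow> 'a::field) \<Rightarrow> nat \<times> nat \<times> nat \<Rightarrow> 'a" where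
  "d1 c = (\<lambda>(a,b,e). of_nat (a+1) * c (a+1,b,e))"
definition d2 :: "(nat \<times> nat \<times> nat \<Rightarrow> 'a::field) \<Rightarrow> nat \<times> nat \<times> nat \<Rightarrow> 'a" where
  "d2 c = (\<lambda>(a,b,e). of_nat (b+1) * c (a,b+1,e))"
definition d3 :: "(nat \<times> nat \<times> nat \<Rightarrow> 'a::field) \<Rightarrow> nat \<times> nat \<times> nat \<Rightarrow> 'a" where
  "d3 c = (\<lambda>(a,b,e). of_nat (e+1) * c (a,b,e+1))"

lemma boxed_d: "boxed N c \<Longrightarrow> boxed N (d1 c) \<and> boxed N (d2 c) \<and> boxed N (d3 c)"
  unfolding boxed_def d1_def d2_def d3_def by fastforce

lemma ax1: "(axis 1 1 :: 'a::field^3)$1 = 1" "(axis 1 1 :: 'a::field^3)$2 = 0" "(axis 1 1 :: 'a::field^3)$3 = 0"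
  by (simp_all add: axis_def)
lemma ax2: "(axis 2 1 :: 'a::field^3)$1 = 0" "(axis 2 1 :: 'a::field^3)$2 = 1" "(axis 2 1 :: 'a::field^3)$3 = 0"
  by (simp_all add: axis_def)
lemma ax3: "(axis 3 1 :: 'a::field^3)$1 = 0" "(axis 3 1 :: 'a::field^3)$2 = 0" "(axis 3 1 :: 'a::field^3)$3 = 1"
  by (simp_all add: axis_def)

lemma Df1_hom_eval: assumes "boxed N c"
  shows "Df (hom_eval N c) u (axis 1 1) = hom_eval N (d1 c) u"
proof -
  have "Df (hom_eval N c) u (axis 1 1) =
     (\<Sum>a\<le>N. of_nat a * u$1^(a-1) * (\<Sum>b\<le>N. \<Sum>e\<le>N. c(a,b,e) * u$2^b * u$3^e))"
    by (simp add: Df_hom_eval Df_mono3 ax1 sum_distrib_left mult_ac)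
  also have "\<dots> = (\<Sum>a\<le>N. of_nat (a+1) * u$1^a * (\<Sum>b\<le>N. \<Sum>e\<le>N. c(a+1,b,e) * u$2^b * u$3^e))"
    by (rule sum_shift_deriv') (simp add: boxed_zero[OF assms])
  also have "\<dots> = hom_eval N (d1 c) u"
    by (simp add: hom_eval_def d1_def sum_distrib_left mult_ac)
  finally show ?thesis .
qed

lemma Df2_hom_eval: assumes "boxed N c"
  shows "Df (hom_eval N c) u (axis 2 1) = hom_eval N (d2 c) u"
proof -
  have "Df (hom_eval N c) u (axis 2 1) =
     (\<Sum>a\<le>N. u$1^a * (\<Sum>b\<le>N. of_nat b * u$2^(b-1) * (\<Sum>e\<le>N. c(a,b,e) * u$3^e)))"
    by (simp add: Df_hom_eval Df_mono3 ax2 sum_distrib_left mult_ac)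
  also have "\<dots> = (\<Sum>a\<le>N. u$1^a * (\<Sum>b\<le>N. of_nat (b+1) * u$2^b * (\<Sum>e\<le>N. c(a,b+1,e) * u$3^e)))"
  proof -
    have "(\<Sum>b\<le>N. of_nat b * u$2^(b-1) * (\<Sum>e\<le>N. c(a,b,e) * u$3^e)) =
          (\<Sum>b\<le>N. of_nat (b+1) * u$2^b * (\<Sum>e\<le>N. c(a,b+1,e) * u$3^e))" for a
      by (rule sum_shift_deriv') (simp add: boxed_zero[OF assms])
    thus ?thesis by simp
  qed
  also have "\<dots> = hom_eval N (d2 c) u"
    by (simp add: hom_eval_def d2_def sum_distrib_left mult_ac)
  finally show ?thesis .
qed

lemma Df3_hom_eval: assumes "boxed N c"
  shows "Df (hom_eval N c) u (axis 3 1) = hom_eval N (d3 c) u"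
proof -
  have "Df (hom_eval N c) u (axis 3 1) =
     (\<Sum>a\<le>N. u$1^a * (\<Sum>b\<le>N. u$2^b * (\<Sum>e\<le>N. of_nat e * u$3^(e-1) * c(a,b,e))))"
    by (simp add: Df_hom_eval Df_mono3 ax3 sum_distrib_left mult_ac)
  also have "\<dots> = (\<Sum>a\<le>N. u$1^a * (\<Sum>b\<le>N. u$2^b * (\<Sum>e\<le>N. of_nat (e+1) * u$3^e * c(a,b,e+1))))"
  proof -
    have "(\<Sum>e\<le>N. of_nat e * u$3^(e-1) * c(a,b,e)) = (\<Sum>e\<le>N. of_nat (e+1) * u$3^e * c(a,b,e+1))" for a b
      by (rule sum_shift_deriv') (simp add: boxed_zero[OF assms])
    thus ?thesis by simp
  qed
  also have "\<dots> = hom_eval N (d3 c) u"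
    by (simp add: hom_eval_def d3_def sum_distrib_left mult_ac)
  finally show ?thesis .
qed


definition Lap :: "('a::field_char_0 ^ 3 \<Rightarrow> 'a) \<Rightarrow> 'a^3 \<Rightarrow> 'a" where
  "Lap f u = (\<Sum>k\<in>UNIV. Df (\<lambda>u. Df f u (axis k 1)) u (axis k 1))"

definition lapc :: "(nat \<times> nat \<times> nat \<Rightarrow> 'a::field) \<Rightarrow> nat \<times> nat \<times> nat \<Rightarrow> 'a" where
  "lapc c = (\<lambda>(a,b,e). of_nat ((a + 2) * (a + 1)) * c (a + 2, b, e)
            + of_nat ((b + 2) * (b + 1)) * c (a, b + 2, e)
            + of_nat ((e + 2) * (e + 1)) * c (a, b, e + 2))"

lemma Lap_hom_eval: assumes "boxed N c"
  shows "Lap (hom_eval N c) u = hom_eval N (lapc c) u"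
proof -
  have b: "boxed N (d1 c)" "boxed N (d2 c)" "boxed N (d3 c)" using boxed_d[OF assms] by auto
  have e1: "(\<lambda>u. Df (hom_eval N c) u (axis 1 1)) = hom_eval N (d1 c)" using Df1_hom_eval[OF assms] by auto
  have e2: "(\<lambda>u. Df (hom_eval N c) u (axis 2 1)) = hom_eval N (d2 c)" using Df2_hom_eval[OF assms] by auto
  have e3: "(\<lambda>u. Df (hom_eval N c) u (axis 3 1)) = hom_eval N (d3 c)" using Df3_hom_eval[OF assms] by auto
  have "Lap (hom_eval N c) u = hom_eval N (d1 (d1 c)) u + hom_eval N (d2 (d2 c)) u + hom_eval N (d3 (d3 c)) u"
    unfolding Lap_def sum_3 e1 e2 e3 using Df1_hom_eval[OF b(1)] Df2_hom_eval[OF b(2)] Df3_hom_eval[OF b(3)] by simp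
  also have "\<dots> = hom_eval N (lapc c) u"
    unfolding hom_eval_def sum.distrib[symmetric] distrib_right[symmetric]
    by (intro sum.cong refl) (simp add: d1_def d2_def d3_def lapc_def algebra_simps)
  finally show ?thesis .
qed

lemma axis_mv: fixes A :: "'a::field^3^3" shows "(A *v axis j 1) $ k = A$k$j"
proof -
  have "(A *v axis j 1) $ k = (\<Sum>i\<in>UNIV. A$k$i * (if i = j then 1 else 0))"
    by (simp add: matrix_vector_mult_def axis_def)
  also have "\<dots> = (\<Sum>i\<in>UNIV. if i = j then A$k$i else 0)" by (rule sum.cong) auto
  finally show ?thesis by simp
qed

lemma Lap_linsub:
  fixes A :: "'a::field_char_0^3^3"
  assumes f: "f \<in> Pgen" and A: "A ** transpose A = mat 1"
  shows "Lap (\<lambda>v. f (A *v v)) u = Lap f (A *v u)"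
proof -
  define g where "g k = (\<lambda>u. Df f u (axis k 1))" for k
  have gp: "g k \<in> Pgen" for k unfolding g_def by (rule Df_pg[OF f])
  have gA: "(\<lambda>u. g k (A *v u)) \<in> Pgen" for k by (rule pg_linsub[OF gp])
  have s1: "(\<lambda>u. Df (\<lambda>v. f (A *v v)) u (axis j 1)) = (\<lambda>u. \<Sum>k\<in>UNIV. A$k$j * g k (A *v u))" for j
  proof
    fix u
    have "Df (\<lambda>v. f (A *v v)) u (axis j 1) = Df f (A *v u) (A *v axis j 1)" by (rule Df_linsub[OF f])
    also have "\<dots> = (\<Sum>k\<in>UNIV. A$k$j * g k (A *v u))" by (subst Df_lin[OF f]) (simp add: axis_mv g_def)
    finally show "Df (\<lambda>v. f (A *v v)) u (axis j 1) = (\<Sum>k\<in>UNIV. A$k$j * g k (A *v u))" .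
  qed
  have s2: "Df (\<lambda>u. \<Sum>k\<in>UNIV. A$k$j * g k (A *v u)) u (axis j 1)
       = (\<Sum>k\<in>UNIV. \<Sum>l\<in>UNIV. A$k$j * A$l$j * Df (g k) (A *v u) (axis l 1))" for j
  proof -
    have "Df (\<lambda>u. \<Sum>k\<in>UNIV. A$k$j * g k (A *v u)) u (axis j 1)
        = (\<Sum>k\<in>UNIV. Df (\<lambda>u. A$k$j * g k (A *v u)) u (axis j 1))"
      by (rule Df_sum) (auto intro!: Pgen.pg_mult Pgen.pg_const gA)
    also have "\<dots> = (\<Sum>k\<in>UNIV. A$k$j * Df (\<lambda>u. g k (A *v u)) u (axis j 1))"
      by (intro sum.cong refl Df_cmult gA)
    also have "\<dots> = (\<Sum>k\<in>UNIV. A$k$j * Df (g k) (A *v u) (A *v axis j 1))"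
      by (simp add: Df_linsub[OF gp])
    also have "\<dots> = (\<Sum>k\<in>UNIV. \<Sum>l\<in>UNIV. A$k$j * A$l$j * Df (g k) (A *v u) (axis l 1))"
      by (subst Df_lin[OF gp]) (simp add: axis_mv sum_distrib_left mult_ac)
    finally show ?thesis .
  qed
  have orth: "(\<Sum>j\<in>UNIV. A$k$j * A$l$j) = (if k = l then 1 else 0)" for k l
    using arg_cong[OF A, of "\<lambda>M. M$k$l"] by (simp add: matrix_matrix_mult_def mat_def transpose_def)
  have "Lap (\<lambda>v. f (A *v v)) u = (\<Sum>j\<in>UNIV. \<Sum>k\<in>UNIV. \<Sum>l\<in>UNIV. A$k$j * A$l$j * Df (g k) (A *v u) (axis l 1))"
    unfolding Lap_def s1 s2 ..
  also have "\<dots> = (\<Sum>k\<in>UNIV. \<Sum>l\<in>UNIV. (\<Sum>j\<in>UNIV. A$k$j * A$l$j) * Df (g k) (A *v u) (axis l 1))"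
  proof -
    have "(\<Sum>j\<in>UNIV. \<Sum>k\<in>UNIV. \<Sum>l\<in>UNIV. A$k$j * A$l$j * Df (g k) (A *v u) (axis l 1))
        = (\<Sum>k\<in>UNIV. \<Sum>j\<in>UNIV. \<Sum>l\<in>UNIV. A$k$j * A$l$j * Df (g k) (A *v u) (axis l 1))"
      by (rule sum.swap)
    also have "\<dots> = (\<Sum>k\<in>UNIV. \<Sum>l\<in>UNIV. \<Sum>j\<in>UNIV. A$k$j * A$l$j * Df (g k) (A *v u) (axis l 1))"
      by (rule sum.cong[OF refl], rule sum.swap)
    also have "\<dots> = (\<Sum>k\<in>UNIV. \<Sum>l\<in>UNIV. (\<Sum>j\<in>UNIV. A$k$j * A$l$j) * Df (g k) (A *v u) (axis l 1))"
      by (simp only: sum_distrib_right)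
    finally show ?thesis .
  qed
  also have "\<dots> = (\<Sum>k\<in>UNIV. Df (g k) (A *v u) (axis k 1))"
  proof (rule sum.cong[OF refl])
    fix k :: 3
    have "(\<Sum>l\<in>UNIV. (\<Sum>j\<in>UNIV. A$k$j * A$l$j) * Df (g k) (A *v u) (axis l 1))
        = (\<Sum>l\<in>UNIV. if k = l then Df (g k) (A *v u) (axis l 1) else 0)"
      by (rule sum.cong[OF refl]) (simp only: orth, simp)
    thus "(\<Sum>l\<in>UNIV. (\<Sum>j\<in>UNIV. A$k$j * A$l$j) * Df (g k) (A *v u) (axis l 1)) = Df (g k) (A *v u) (axis k 1)"
      by simp
  qed
  also have "\<dots> = Lap f (A *v u)" by (simp add: Lap_def g_def)
  finally show ?thesis .
qed


definition mlist :: "('a::field \<times> (nat \<times> nat \<times> nat)) list \<Rightarrow> 'a^3 \<Rightarrow> 'a" where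
  "mlist L v = sum_list (map (\<lambda>(r,(a,b,e)). r * mono3 a b e v) L)"

lemma mono3_add: "mono3 a b e v * mono3 a' b' e' v = mono3 (a+a') (b+b') (e+e') v"
  by (simp add: mono3_def power_add mult_ac)

definition mprod :: "('a::field \<times> (nat \<times> nat \<times> nat)) list \<Rightarrow> ('a \<times> (nat \<times> nat \<times> nat)) list \<Rightarrow> ('a \<times> (nat \<times> nat \<times> nat)) list" where
  "mprod L1 L2 = concat (map (\<lambda>(r,(a,b,e)). map (\<lambda>(r',(a',b',e')). (r*r', (a+a',b+b',e+e'))) L2) L1)"

lemma mlist_append: "mlist (L1 @ L2) v = mlist L1 v + mlist L2 v"
  by (simp add: mlist_def)

lemma mlist_prod: "mlist (mprod L1 L2) v = mlist L1 v * mlist L2 v"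
proof (induction L1)
  case Nil then show ?case by (simp add: mlist_def mprod_def)
next
  case (Cons x L1)
  obtain r a b e where x: "x = (r,(a,b,e))" by (cases x) auto
  have "mlist (map (\<lambda>(r',(a',b',e')). (r*r', (a+a',b+b',e+e'))) L2) v = r * mono3 a b e v * mlist L2 v"
  proof (induction L2)
    case Nil then show ?case by (simp add: mlist_def)
  next
    case (Cons y L2)
    obtain r' a' b' e' where y: "y = (r',(a',b',e'))" by (cases y) auto
    from Cons show ?case by (simp add: mlist_def y mono3_add[symmetric] algebra_simps)
  qed
  then show ?case using Cons by (simp add: mprod_def x mlist_append[symmetric]) (simp add: mlist_def algebra_simps)
qed

lemma pg_mlist: "f \<in> Pgen \<Longrightarrow> \<exists>L. f = mlist L"
proof (induction rule: Pgen.induct)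
  case (pg_const c)
  then show ?case by (intro exI[of _ "[(c,(0,0,0))]"]) (simp add: mlist_def mono3_def fun_eq_iff)
next
  case (pg_coord k)
  have "k = 1 \<or> k = 2 \<or> k = 3" using exhaust_3 by blast
  then show ?case
  proof (elim disjE)
    assume "k = 1" then show ?case by (intro exI[of _ "[(1,(1,0,0))]"]) (simp add: mlist_def mono3_def fun_eq_iff)
  next
    assume "k = 2" then show ?case by (intro exI[of _ "[(1,(0,1,0))]"]) (simp add: mlist_def mono3_def fun_eq_iff)
  next
    assume "k = 3" then show ?case by (intro exI[of _ "[(1,(0,0,1))]"]) (simp add: mlist_def mono3_def fun_eq_iff)
  qed
next
  case (pg_add f g)
  then obtain L1 L2 where "f = mlist L1" "g = mlist L2" by blast
  then show ?case by (intro exI[of _ "L1 @ L2"]) (simp add: mlist_append fun_eq_iff)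
next
  case (pg_mult f g)
  then obtain L1 L2 where "f = mlist L1" "g = mlist L2" by blast
  then show ?case by (intro exI[of _ "mprod L1 L2"]) (simp add: mlist_prod fun_eq_iff)
qed

definition cL :: "('a::field \<times> (nat \<times> nat \<times> nat)) list \<Rightarrow> nat \<times> nat \<times> nat \<Rightarrow> 'a" where
  "cL L x = sum_list (map (\<lambda>(r,y). if y = x then r else 0) L)"

lemma hom_eval_delta:
  assumes "a \<le> N" "b \<le> N" "e \<le> N"
  shows "hom_eval N (\<lambda>x. if x = (a,b,e) then r else 0) v = r * mono3 a b e v"
proof -
  define m where "m a' b' e' = (v $ 1) ^ a' * (v $ 2) ^ b' * (v $ 3) ^ e'" for a' b' e'
  have "hom_eval N (\<lambda>x. if x = (a,b,e) then r else 0) v =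
     (\<Sum>a'\<le>N. \<Sum>b'\<le>N. \<Sum>e'\<le>N. if e' = e then (if a' = a \<and> b' = b then r * m a' b' e' else 0) else 0)"
    unfolding hom_eval_def m_def by (intro sum.cong refl) auto
  also have "\<dots> = (\<Sum>a'\<le>N. \<Sum>b'\<le>N. if b' = b then (if a' = a then r * m a' b' e else 0) else 0)"
    using assms by (intro sum.cong refl) simp
  also have "\<dots> = (\<Sum>a'\<le>N. if a' = a then r * m a' b e else 0)"
    using assms by (intro sum.cong refl) simp
  also have "\<dots> = r * mono3 a b e v"
    using assms by (simp add: m_def mono3_def)
  finally show ?thesis .
qed

lemma hom_eval_add: "hom_eval N (\<lambda>x. c x + d x) v = hom_eval N c v + hom_eval N d v"
  by (simp add: hom_eval_def sum.distrib algebra_simps)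

lemma mlist_hom_eval:
  assumes "\<forall>(r,(a,b,e))\<in>set L. a \<le> N \<and> b \<le> N \<and> e \<le> N"
  shows "mlist L v = hom_eval N (cL L) v"
  using assms
proof (induction L)
  case Nil then show ?case by (simp add: mlist_def cL_def hom_eval_def)
next
  case (Cons x L)
  obtain r a b e where x: "x = (r,(a,b,e))" by (cases x) auto
  have cl: "cL (x # L) = (\<lambda>y. (if y = (a,b,e) then r else 0) + cL L y)"
    by (auto simp: cL_def x fun_eq_iff)
  have "mlist (x # L) v = r * mono3 a b e v + mlist L v" by (simp add: mlist_def x)
  also have "\<dots> = hom_eval N (cL (x # L)) v"
    unfolding cl hom_eval_add using Cons hom_eval_delta[of a N b e r v] by (auto simp: x)
  finally show ?case .
qed

lemma cL_nz: "cL L x \<noteq> 0 \<Longrightarrow> x \<in> snd ` set L"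
proof (induction L)
  case Nil then show ?case by (simp add: cL_def)
next
  case (Cons y L)
  show ?case
  proof (cases "snd y = x")
    case True then show ?thesis by simp
  next
    case False
    hence "cL (y # L) x = cL L x" by (cases y) (auto simp: cL_def)
    with Cons False show ?thesis by auto
  qed
qed

lemma cL_boxed:
  assumes "\<forall>(r,(a,b,e))\<in>set L. a \<le> N \<and> b \<le> N \<and> e \<le> N"
  shows "boxed N (cL L)"
  unfolding boxed_def
proof (intro allI impI)
  fix a b e assume "cL L (a,b,e) \<noteq> 0"
  then obtain r where "(r,(a,b,e)) \<in> set L" using cL_nz by force
  thus "a \<le> N \<and> b \<le> N \<and> e \<le> N" using assms by auto
qed

lemma pg_hom_eval_rep: "f \<in> Pgen \<Longrightarrow> \<exists>N c. boxed N c \<and> f = hom_eval N c"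
proof -
  assume "f \<in> Pgen"
  then obtain L where L: "f = mlist L" using pg_mlist by blast
  define N where "N = Max ((\<lambda>(r,(a,b,e)). a + b + e) ` set L \<union> {0})"
  have "\<forall>(r,(a,b,e))\<in>set L. a \<le> N \<and> b \<le> N \<and> e \<le> N"
  proof (clarify)
    fix r a b e assume "(r,(a,b,e)) \<in> set L"
    hence "a + b + e \<le> N" unfolding N_def by (intro Max_ge) force+
    thus "a \<le> N \<and> b \<le> N \<and> e \<le> N" by simp
  qed
  thus ?thesis using L mlist_hom_eval cL_boxed by blast
qed

lemma sum_atMost_shrink:
  fixes M N :: nat
  assumes "M \<le> N" "\<And>a. M < a \<Longrightarrow> a \<le> N \<Longrightarrow> F a = 0"
  shows "(\<Sum>a\<le>N. F a) = (\<Sum>a\<le>M. F a)"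
proof (rule sum.mono_neutral_right)
  show "finite {..N}" by simp
  show "{..M} \<subseteq> {..N}" using assms(1) by auto
  show "\<forall>i\<in>{..N} - {..M}. F i = 0" using assms(2) by auto
qed

lemma hom_eval_shrink:
  fixes c :: "nat \<times> nat \<times> nat \<Rightarrow> 'a::field"
  assumes "boxed M c" "M \<le> N"
  shows "hom_eval N c = hom_eval M c"
proof
  fix v :: "'a^3"
  define T where "T a b e = c (a, b, e) * (v $ 1) ^ a * (v $ 2) ^ b * (v $ 3) ^ e" for a b e
  have z: "T a b e = 0" if "M < a \<or> M < b \<or> M < e" for a b e
    unfolding T_def using boxed_zero[OF assms(1) that] by simp
  have e: "(\<Sum>e\<le>N. T a b e) = (\<Sum>e\<le>M. T a b e)" for a b
    by (rule sum_atMost_shrink[OF assms(2)]) (simp add: z)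
  have b: "(\<Sum>b\<le>N. \<Sum>e\<le>M. T a b e) = (\<Sum>b\<le>M. \<Sum>e\<le>M. T a b e)" for a
    by (rule sum_atMost_shrink[OF assms(2)]) (simp add: z)
  have a: "(\<Sum>a\<le>N. \<Sum>b\<le>M. \<Sum>e\<le>M. T a b e) = (\<Sum>a\<le>M. \<Sum>b\<le>M. \<Sum>e\<le>M. T a b e)"
    by (rule sum_atMost_shrink[OF assms(2)]) (simp add: z)
  have "hom_eval N c v = (\<Sum>a\<le>N. \<Sum>b\<le>N. \<Sum>e\<le>N. T a b e)" unfolding hom_eval_def T_def ..
  also have "\<dots> = (\<Sum>a\<le>M. \<Sum>b\<le>M. \<Sum>e\<le>M. T a b e)" unfolding e b a ..
  also have "\<dots> = hom_eval M c v" unfolding hom_eval_def T_def ..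
  finally show "hom_eval N c v = hom_eval M c v" .
qed


lemma harm_boxed: "harm_coeffs n c \<Longrightarrow> boxed n c"
  unfolding harm_coeffs_def boxed_def by force

lemma term_scale: fixes c t x y z :: "'a::field" shows "a+b+e = n \<Longrightarrow> c * (t*x)^a * (t*y)^b * (t*z)^e = t^n * (c * x^a * y^b * z^e)"
  by (auto simp: power_mult_distrib power_add mult_ac)

lemma hom_eval_scale:
  assumes "\<forall>a b e. c(a,b,e) \<noteq> 0 \<longrightarrow> a + b + e = n"
  shows "hom_eval N c (t *s v) = t^n * hom_eval N c v"
  unfolding hom_eval_def sum_distrib_left
proof (intro sum.cong refl)
  fix a b e
  show "c (a, b, e) * (t *s v) $ 1 ^ a * (t *s v) $ 2 ^ b * (t *s v) $ 3 ^ e =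
         t ^ n * (c (a, b, e) * v $ 1 ^ a * v $ 2 ^ b * v $ 3 ^ e)"
  proof (cases "c(a,b,e) = 0")
    case False
    hence "a + b + e = n" using assms by blast
    from term_scale[OF this, of "c(a,b,e)" t "v$1" "v$2" "v$3"] show ?thesis by simp
  qed simp
qed

lemma hom_eval_scale_gen:
  "hom_eval N c (t *s v) = hom_eval N (\<lambda>x. t^(fst x + fst (snd x) + snd (snd x)) * c x) v"
  unfolding hom_eval_def
  by (intro sum.cong refl) (auto simp: power_mult_distrib power_add mult_ac)

lemma hom_eval_diff: "hom_eval N c v - hom_eval N d v = hom_eval N (\<lambda>x. c x - d x) v"
  by (simp add: hom_eval_def sum_subtractf algebra_simps)

lemma hom_eval_cmult: "t * hom_eval N c v = hom_eval N (\<lambda>x. t * c x) v"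
  by (simp add: hom_eval_def sum_distrib_left algebra_simps)

lemma infinite_UNIV_char0: "infinite (UNIV :: 'a::field_char_0 set)"
  using infinite_UNIV_char_0 by blast

lemma harm_linsub:
  fixes A :: "'a::field_char_0^3^3"
  assumes f: "f \<in> Harm n" and A: "A ** transpose A = mat 1"
  shows "(\<lambda>v. f (A *v v)) \<in> Harm n"
proof -
  obtain c where hc: "harm_coeffs n c" and fc: "f = hom_eval n c"
    using f unfolding Harm_def by blast
  have deg: "\<forall>a b e. c(a,b,e) \<noteq> 0 \<longrightarrow> a + b + e = n" using hc unfolding harm_coeffs_def by blast
  define h where "h = (\<lambda>v. f (A *v v))"
  have fp: "f \<in> Pgen" unfolding fc by (rule pg_hom_eval)
  have hp: "h \<in> Pgen" unfolding h_def by (rule pg_linsub[OF fp])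
  obtain N0 d where bd0: "boxed N0 d" and hd0: "h = hom_eval N0 d" using pg_hom_eval_rep[OF hp] by blast
  define N where "N = max N0 n"
  have bd: "boxed N d" using bd0 unfolding boxed_def N_def by force
  have hd: "h = hom_eval N d" using hd0 hom_eval_shrink[OF bd0, of N] by (simp add: N_def)
  have hhom: "h (t *s v) = t^n * h v" for t v
    by (simp add: h_def mv_smult fc hom_eval_scale[OF deg])
  have dz: "d (a,b,e) = 0" if "a + b + e \<noteq> n" for a b e
  proof (cases "a \<le> N \<and> b \<le> N \<and> e \<le> N")
    case False thus ?thesis using boxed_zero[OF bd] by force
  next
    case True
    define D where "D = (\<lambda>x. (2::'a)^(fst x + fst (snd x) + snd (snd x)) * d x - 2^n * d x)"
    have "hom_eval N D v = 0" for v
    proof -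
      have "hom_eval N D v = hom_eval N (\<lambda>x. 2^(fst x + fst (snd x) + snd (snd x)) * d x) v - hom_eval N (\<lambda>x. 2^n * d x) v"
        by (simp add: hom_eval_diff D_def)
      also have "\<dots> = h (2 *s v) - 2^n * h v" by (simp add: hd hom_eval_scale_gen hom_eval_cmult)
      finally show ?thesis by (simp add: hhom)
    qed
    hence "D (a,b,e) = 0" using hom_eval_unique[OF infinite_UNIV_char0, of N D] True by blast
    hence "((2::'a)^(a+b+e) - 2^n) * d(a,b,e) = 0" by (simp add: D_def algebra_simps)
    moreover have "(2::'a)^(a+b+e) \<noteq> 2^n"
    proof
      assume "(2::'a)^(a+b+e) = 2^n"
      hence "of_nat (2^(a+b+e)) = (of_nat (2^n) :: 'a)" by simp
      hence "(2::nat)^(a+b+e) = 2^n" using of_nat_eq_iff by blast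
      thus False using that by simp
    qed
    ultimately show ?thesis by simp
  qed
  have bdn: "boxed n d" unfolding boxed_def using dz by force
  have hdn: "h = hom_eval n d" using hd hom_eval_shrink[OF bdn, of N] by (simp add: N_def)
  have lapf: "Lap f u = 0" for u
  proof -
    have "lapc c = (\<lambda>_. 0)" using hc unfolding harm_coeffs_def lapc_def by (auto simp: fun_eq_iff)
    thus ?thesis unfolding fc Lap_hom_eval[OF harm_boxed[OF hc]] by (simp add: hom_eval_def)
  qed
  have "Lap h u = 0" for u unfolding h_def Lap_linsub[OF fp A] lapf ..
  hence lz: "hom_eval n (lapc d) u = 0" for u using Lap_hom_eval[OF bdn, of u] hdn by simp
  have "lapc d (a,b,e) = 0" for a b e
  proof (cases "a \<le> n \<and> b \<le> n \<and> e \<le> n")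
    case True thus ?thesis using hom_eval_unique[OF infinite_UNIV_char0, of n "lapc d"] lz by blast
  next
    case False thus ?thesis unfolding lapc_def using boxed_zero[OF bdn] by auto
  qed
  hence "harm_coeffs n d" unfolding harm_coeffs_def lapc_def using dz by auto
  thus ?thesis unfolding Harm_def using hdn h_def by auto
qed


lemma so3_right: "g \<in> SO3 \<Longrightarrow> g ** transpose g = mat 1"
  unfolding SO3_def using matrix_left_right_inverse1 by blast

lemma so3_left: "g \<in> SO3 \<Longrightarrow> transpose g ** g = mat 1"
  unfolding SO3_def by blast

lemma so3_inv: assumes "(g::'a::field^3^3) \<in> SO3" shows "matrix_inv g = transpose g"
proof -
  have r: "g ** transpose g = mat 1" and l: "transpose g ** g = mat 1"
    using so3_right[OF assms] so3_left[OF assms] by auto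
  show ?thesis unfolding matrix_inv_def
  proof (rule some_equality)
    show "g ** transpose g = mat 1 \<and> transpose g ** g = mat 1" using r l by blast
  next
    fix A' assume "g ** A' = mat 1 \<and> A' ** g = mat 1"
    hence "A' ** g = mat 1" by blast
    hence "A' ** g ** transpose g = transpose g" by (simp add: matrix_mul_lid)
    thus "A' = transpose g" by (simp add: matrix_mul_assoc[symmetric] r matrix_mul_rid)
  qed
qed

lemma so3_mult: assumes "g \<in> SO3" "h \<in> SO3" shows "g ** h \<in> SO3"
proof -
  have "transpose (g ** h) ** (g ** h) = transpose h ** (transpose g ** g) ** h"
    by (simp add: matrix_transpose_mul matrix_mul_assoc)
  also have "\<dots> = mat 1" using assms by (simp add: so3_left matrix_mul_lid)
  finally show ?thesis using assms unfolding SO3_def by (simp add: det_mul)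
qed

lemma so3_transpose: assumes "g \<in> SO3" shows "transpose g \<in> SO3"
  using so3_right[OF assms] assms unfolding SO3_def by (simp add: det_transpose)

lemma wact_alt: "g \<in> SO3 \<Longrightarrow> wact g w = (\<lambda>i v. w i (transpose g *v v))"
  by (simp add: wact_def so3_inv)

lemma wact_comp: assumes "g \<in> SO3" "h \<in> SO3"
  shows "wact g (wact h w) = wact (g ** h) w"
proof -
  have e: "transpose (g ** h) *v v = transpose h *v (transpose g *v v)" for v
    by (simp only: matrix_transpose_mul matrix_vector_mul_assoc)
  show ?thesis unfolding wact_alt[OF assms(1)] wact_alt[OF assms(2)] wact_alt[OF so3_mult[OF assms]] e ..
qed

lemma harm_coeffs_lin:
  assumes "harm_coeffs n c" "harm_coeffs n d"
  shows "harm_coeffs n (\<lambda>x. a * c x + b * d x)"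
proof -
  have "of_nat ((x + 2) * (x + 1)) * (a * c (x + 2, y, z) + b * d (x + 2, y, z))
     + of_nat ((y + 2) * (y + 1)) * (a * c (x, y + 2, z) + b * d (x, y + 2, z))
     + of_nat ((z + 2) * (z + 1)) * (a * c (x, y, z + 2) + b * d (x, y, z + 2))
   = a * (of_nat ((x + 2) * (x + 1)) * c (x + 2, y, z) + of_nat ((y + 2) * (y + 1)) * c (x, y + 2, z)
          + of_nat ((z + 2) * (z + 1)) * c (x, y, z + 2))
   + b * (of_nat ((x + 2) * (x + 1)) * d (x + 2, y, z) + of_nat ((y + 2) * (y + 1)) * d (x, y + 2, z)
          + of_nat ((z + 2) * (z + 1)) * d (x, y, z + 2))" for x y z
    by (simp add: algebra_simps)
  thus ?thesis using assms unfolding harm_coeffs_def by simp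
qed

lemma hom_eval_lin: "hom_eval n (\<lambda>x. a * c x + b * d x) v = a * hom_eval n c v + b * hom_eval n d v"
  by (simp add: hom_eval_def sum.distrib sum_distrib_left algebra_simps)

lemma Harm_lin: assumes "f \<in> Harm n" "g \<in> Harm n" shows "(\<lambda>v. a * f v + b * g v) \<in> Harm n"
proof -
  obtain c d where "harm_coeffs n c" "f = hom_eval n c" "harm_coeffs n d" "g = hom_eval n d"
    using assms unfolding Harm_def by blast
  thus ?thesis unfolding Harm_def
    by (intro CollectI exI[of _ "\<lambda>x. a * c x + b * d x"]) (auto simp: harm_coeffs_lin hom_eval_lin fun_eq_iff)
qed

lemma Harm_zero: "(\<lambda>v::'a::field^3. 0::'a) \<in> Harm n"
proof -
  have "harm_coeffs n (\<lambda>x. 0::'a)" by (simp add: harm_coeffs_def)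
  moreover have "hom_eval n (\<lambda>x. 0::'a) = (\<lambda>v. 0)" by (simp add: hom_eval_def fun_eq_iff)
  ultimately show ?thesis unfolding Harm_def by (intro CollectI exI[of _ "\<lambda>x. 0"]) simp
qed

lemma Wsp_lin: assumes "x \<in> Wsp ns" "y \<in> Wsp ns"
  shows "wadd (wscale a x) (wscale b y) \<in> Wsp ns"
  using assms unfolding Wsp_def wadd_def wscale_def by (auto intro: Harm_lin)

lemma wscale_1: "wscale 1 x = x" by (simp add: wscale_def)
lemma wscale_0_add: "wadd (wscale a x) (wscale 0 y) = wscale a x" by (simp add: wscale_def wadd_def)

lemma Wsp_add: "x \<in> Wsp ns \<Longrightarrow> y \<in> Wsp ns \<Longrightarrow> wadd x y \<in> Wsp ns"
  using Wsp_lin[of x ns y 1 1] by (simp add: wscale_1)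

lemma Wsp_scale: "x \<in> Wsp ns \<Longrightarrow> wscale a x \<in> Wsp ns"
  using Wsp_lin[of x ns x a 0] by (simp add: wscale_0_add)

lemma Wsp_wact:
  fixes g :: "'a::field_char_0^3^3"
  assumes g: "g \<in> SO3" and w: "w \<in> Wsp ns" shows "wact g w \<in> Wsp ns"
proof -
  have A: "transpose g ** transpose (transpose g) = mat 1" using so3_left[OF g] by simp
  show ?thesis using w harm_linsub[OF _ A] unfolding Wsp_def wact_alt[OF g] by auto
qed

lemma wact_lin: "wact g (wadd (wscale a x) (wscale b y)) = wadd (wscale a (wact g x)) (wscale b (wact g y))"
  by (simp add: wact_def wadd_def wscale_def)

lemma lin_add: assumes "lin_on V wscale wadd l" "x \<in> V" "y \<in> V" shows "l (wadd x y) = l x + l y"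
  using assms unfolding lin_on_def by (metis mult_1 wscale_1)

lemma lin_scale: assumes "lin_on V wscale wadd l" "x \<in> V" shows "l (wscale a x) = a * l x"
  using assms unfolding lin_on_def by (metis mult_zero_left add_0_right wscale_0_add)


definition vR :: "real^3 \<Rightarrow> complex^3" where "vR u = (\<chi> j. complex_of_real (u$j))"
definition reW :: "(nat \<Rightarrow> complex^3 \<Rightarrow> complex) \<Rightarrow> nat \<Rightarrow> real^3 \<Rightarrow> real" where
  "reW x = (\<lambda>i u. Re (x i (vR u)))"
definition imW :: "(nat \<Rightarrow> complex^3 \<Rightarrow> complex) \<Rightarrow> nat \<Rightarrow> real^3 \<Rightarrow> real" where
  "imW x = (\<lambda>i u. Im (x i (vR u)))"
definition gC :: "real^3^3 \<Rightarrow> complex^3^3" where "gC g = (\<chi> i j. complex_of_real (g$i$j))"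

lemma vR_nth[simp]: "vR u $ j = complex_of_real (u$j)" by (simp add: vR_def)
lemma gC_nth[simp]: "gC g $ i $ j = complex_of_real (g$i$j)" by (simp add: gC_def)

lemma hom_eval_ofreal: "hom_eval n (\<lambda>x. complex_of_real (c x)) (vR u) = complex_of_real (hom_eval n c u)"
  by (simp add: hom_eval_def)

lemma hom_eval_vR_expand: "hom_eval n c (vR u) = (\<Sum>a\<le>n. \<Sum>b\<le>n. \<Sum>e\<le>n. c (a,b,e) * complex_of_real (u$1^a * u$2^b * u$3^e))"
  by (simp add: hom_eval_def mult_ac)

lemma Re_mult_of_real: "Re (z * complex_of_real r) = Re z * r" by simp
lemma Im_mult_of_real: "Im (z * complex_of_real r) = Im z * r" by simp

lemma hom_eval_Re: "Re (hom_eval n c (vR u)) = hom_eval n (\<lambda>x. Re (c x)) u"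
  unfolding hom_eval_vR_expand by (simp add: Re_sum hom_eval_def mult_ac)

lemma hom_eval_Im: "Im (hom_eval n c (vR u)) = hom_eval n (\<lambda>x. Im (c x)) u"
  unfolding hom_eval_vR_expand by (simp add: Im_sum hom_eval_def mult_ac)

lemma harm_ofreal: "harm_coeffs n c \<Longrightarrow> harm_coeffs n (\<lambda>x. complex_of_real (c x))"
  unfolding harm_coeffs_def
proof (intro conjI allI impI; elim conjE)
  fix a b e
  assume h: "\<forall>a b e. of_nat ((a + 2) * (a + 1)) * c (a + 2, b, e) + of_nat ((b + 2) * (b + 1)) * c (a, b + 2, e) +
           of_nat ((e + 2) * (e + 1)) * c (a, b, e + 2) = 0"
  show "of_nat ((a + 2) * (a + 1)) * complex_of_real (c (a + 2, b, e)) +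
       of_nat ((b + 2) * (b + 1)) * complex_of_real (c (a, b + 2, e)) +
       of_nat ((e + 2) * (e + 1)) * complex_of_real (c (a, b, e + 2)) = 0"
    using arg_cong[OF h[rule_format, of a b e], of complex_of_real] by simp
qed auto

lemma harm_Re: "harm_coeffs n c \<Longrightarrow> harm_coeffs n (\<lambda>x. Re (c x))"
  unfolding harm_coeffs_def
proof (intro conjI allI impI; elim conjE)
  fix a b e
  assume h: "\<forall>a b e. of_nat ((a + 2) * (a + 1)) * c (a + 2, b, e) + of_nat ((b + 2) * (b + 1)) * c (a, b + 2, e) +
           of_nat ((e + 2) * (e + 1)) * c (a, b, e + 2) = 0"
  show "of_nat ((a + 2) * (a + 1)) * Re (c (a + 2, b, e)) +
       of_nat ((b + 2) * (b + 1)) * Re (c (a, b + 2, e)) +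
       of_nat ((e + 2) * (e + 1)) * Re (c (a, b, e + 2)) = 0"
    using arg_cong[OF h[rule_format, of a b e], of Re] by simp
qed auto

lemma harm_Im: "harm_coeffs n c \<Longrightarrow> harm_coeffs n (\<lambda>x. Im (c x))"
  unfolding harm_coeffs_def
proof (intro conjI allI impI; elim conjE)
  fix a b e
  assume h: "\<forall>a b e. of_nat ((a + 2) * (a + 1)) * c (a + 2, b, e) + of_nat ((b + 2) * (b + 1)) * c (a, b + 2, e) +
           of_nat ((e + 2) * (e + 1)) * c (a, b, e + 2) = 0"
  show "of_nat ((a + 2) * (a + 1)) * Im (c (a + 2, b, e)) +
       of_nat ((b + 2) * (b + 1)) * Im (c (a, b + 2, e)) +
       of_nat ((e + 2) * (e + 1)) * Im (c (a, b, e + 2)) = 0"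
    using arg_cong[OF h[rule_format, of a b e], of Im] by simp
qed auto

lemma infinite_Reals_complex: "infinite (\<real> :: complex set)"
proof
  assume "finite (\<real> :: complex set)"
  hence "finite (range (complex_of_real))" by (simp add: Reals_def)
  hence "finite (UNIV :: real set)" using finite_imageD inj_of_real by blast
  thus False using infinite_UNIV_char_0 by blast
qed

lemma Harm_unique_real:
  assumes f: "f \<in> Harm n" and g: "g \<in> Harm n" and eq: "\<And>u. f (vR u) = g (vR u)"
  shows "f = g"
proof -
  obtain c1 c2 where c: "f = hom_eval n c1" "g = hom_eval n c2"
    using f g unfolding Harm_def by blast
  define d where "d = (\<lambda>x. 1 * c1 x + (-1) * c2 x)"
  have hd: "hom_eval n d v = f v - g v" for v unfolding d_def hom_eval_lin c by simp
  have dz: "hom_eval n d v = 0" if "\<forall>i. v $ i \<in> \<real>" for v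
  proof -
    have "v = vR (\<chi> j. Re (v$j))" using that by (simp add: vec_eq_iff complex_is_Real_iff)
    thus ?thesis using hd eq by (metis right_minus_eq)
  qed
  have "d (a,b,e) = 0" if "a \<le> n" "b \<le> n" "e \<le> n" for a b e
    using hom_eval_unique[OF infinite_Reals_complex, of n d] dz that by blast
  hence "hom_eval n d v = 0" for v by (simp add: hom_eval_def)
  thus ?thesis using hd by (auto simp: fun_eq_iff)
qed

lemma complexify_H_eq:
  assumes "harm_coeffs n c"
  shows "complexify_H n (hom_eval n c) = hom_eval n (\<lambda>x. complex_of_real (c x))"
  unfolding complexify_H_def
proof (rule the_equality)
  show "hom_eval n (\<lambda>x. complex_of_real (c x)) \<in> Harm n \<and>
    (\<forall>v. hom_eval n (\<lambda>x. complex_of_real (c x)) (\<chi> j. complex_of_real (v $ j)) = complex_of_real (hom_eval n c v))"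
    using harm_ofreal[OF assms] hom_eval_ofreal[of n c] unfolding Harm_def vR_def by auto
next
  fix h assume h: "h \<in> Harm n \<and> (\<forall>v. h (\<chi> j. complex_of_real (v $ j)) = complex_of_real (hom_eval n c v))"
  show "h = hom_eval n (\<lambda>x. complex_of_real (c x))"
  proof (rule Harm_unique_real)
    show "h \<in> Harm n" using h by blast
    show "hom_eval n (\<lambda>x. complex_of_real (c x)) \<in> Harm n" using harm_ofreal[OF assms] unfolding Harm_def by auto
    show "h (vR u) = hom_eval n (\<lambda>x. complex_of_real (c x)) (vR u)" for u
      using h hom_eval_ofreal[of n c u] unfolding vR_def by auto
  qed
qed


lemma cH_props:
  assumes "f \<in> Harm n"
  shows "complexify_H n f \<in> Harm n" "complexify_H n f (vR u) = complex_of_real (f u)"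
proof -
  obtain c where c: "harm_coeffs n c" "f = hom_eval n c" using assms unfolding Harm_def by blast
  have e: "complexify_H n f = hom_eval n (\<lambda>x. complex_of_real (c x))" using complexify_H_eq[OF c(1)] c(2) by simp
  show "complexify_H n f \<in> Harm n" unfolding e Harm_def using harm_ofreal[OF c(1)] by auto
  show "complexify_H n f (vR u) = complex_of_real (f u)" using hom_eval_ofreal[of n c u] e c(2) by simp
qed

lemma cW_Wsp: "w \<in> Wsp ns \<Longrightarrow> complexify_W ns w \<in> Wsp ns"
  unfolding Wsp_def complexify_W_def using cH_props(1) by auto

lemma cW_vR: "w \<in> Wsp ns \<Longrightarrow> complexify_W ns w i (vR u) = complex_of_real (w i u)"
  unfolding complexify_W_def using cH_props(2) by (auto simp: Wsp_def)

lemma Harm_Re: "h \<in> Harm n \<Longrightarrow> (\<lambda>u. Re (h (vR u))) \<in> Harm n \<and> complexify_H n (\<lambda>u. Re (h (vR u))) = hom_eval n (\<lambda>x. complex_of_real (Re (c x)))"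
  if "h = hom_eval n c" "harm_coeffs n c" for h c
proof -
  have e: "(\<lambda>u. Re (h (vR u))) = hom_eval n (\<lambda>x. Re (c x))" using that hom_eval_Re by auto
  show ?thesis unfolding e using harm_Re[OF that(2)] complexify_H_eq[OF harm_Re[OF that(2)]] unfolding Harm_def by auto
qed

lemma Harm_Im: "h \<in> Harm n \<Longrightarrow> (\<lambda>u. Im (h (vR u))) \<in> Harm n \<and> complexify_H n (\<lambda>u. Im (h (vR u))) = hom_eval n (\<lambda>x. complex_of_real (Im (c x)))"
  if "h = hom_eval n c" "harm_coeffs n c" for h c
proof -
  have e: "(\<lambda>u. Im (h (vR u))) = hom_eval n (\<lambda>x. Im (c x))" using that hom_eval_Im by auto
  show ?thesis unfolding e using harm_Im[OF that(2)] complexify_H_eq[OF harm_Im[OF that(2)]] unfolding Harm_def by auto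
qed

lemma reW_Wsp: assumes x: "x \<in> Wsp ns" shows "reW x \<in> Wsp ns"
  unfolding Wsp_def
proof (intro CollectI conjI allI impI)
  fix i assume i: "i < length ns"
  hence xi: "x i \<in> Harm (ns!i)" using x by (auto simp: Wsp_def)
  then obtain c where c: "harm_coeffs (ns!i) c" "x i = hom_eval (ns!i) c" by (auto simp: Harm_def)
  show "reW x i \<in> Harm (ns!i)" using Harm_Re[OF c(2,1) xi] unfolding reW_def by blast
next
  fix i assume "length ns \<le> i" thus "reW x i = (\<lambda>_. 0)" using x by (auto simp: reW_def Wsp_def)
qed

lemma imW_Wsp: assumes x: "x \<in> Wsp ns" shows "imW x \<in> Wsp ns"
  unfolding Wsp_def
proof (intro CollectI conjI allI impI)
  fix i assume i: "i < length ns"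
  hence xi: "x i \<in> Harm (ns!i)" using x by (auto simp: Wsp_def)
  then obtain c where c: "harm_coeffs (ns!i) c" "x i = hom_eval (ns!i) c" by (auto simp: Harm_def)
  show "imW x i \<in> Harm (ns!i)" using Harm_Im[OF c(2,1) xi] unfolding imW_def by blast
next
  fix i assume "length ns \<le> i" thus "imW x i = (\<lambda>_. 0)" using x by (auto simp: imW_def Wsp_def)
qed

lemma decomp:
  assumes x: "x \<in> Wsp ns"
  shows "x = wadd (complexify_W ns (reW x)) (wscale \<i> (complexify_W ns (imW x)))"
proof (rule ext, rule ext)
  fix i v
  show "x i v = wadd (complexify_W ns (reW x)) (wscale \<i> (complexify_W ns (imW x))) i v"
  proof (cases "i < length ns")
    case True
    then obtain c where c: "harm_coeffs (ns!i) c" "x i = hom_eval (ns!i) c" using x unfolding Wsp_def Harm_def by blast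
    have r: "complexify_H (ns!i) (reW x i) = hom_eval (ns!i) (\<lambda>x. complex_of_real (Re (c x)))"
      using Harm_Re[OF c(2,1)] x True unfolding Wsp_def reW_def by auto
    have m: "complexify_H (ns!i) (imW x i) = hom_eval (ns!i) (\<lambda>x. complex_of_real (Im (c x)))"
      using Harm_Im[OF c(2,1)] x True unfolding Wsp_def imW_def by auto
    have "hom_eval (ns!i) (\<lambda>z. 1 * complex_of_real (Re (c z)) + \<i> * complex_of_real (Im (c z))) v = hom_eval (ns!i) c v"
      by (simp add: complex_eq[symmetric])
    thus ?thesis using True unfolding wadd_def wscale_def complexify_W_def r m c(2) hom_eval_lin by simp
  next
    case False thus ?thesis using x unfolding Wsp_def wadd_def wscale_def complexify_W_def by auto
  qed
qed

lemma cW_lin: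
  assumes x: "x \<in> Wsp ns" and y: "y \<in> Wsp ns"
  shows "complexify_W ns (wadd (wscale a x) (wscale b y))
       = wadd (wscale (complex_of_real a) (complexify_W ns x)) (wscale (complex_of_real b) (complexify_W ns y))"
proof (rule ext, rule ext)
  fix i v
  show "complexify_W ns (wadd (wscale a x) (wscale b y)) i v
       = wadd (wscale (complex_of_real a) (complexify_W ns x)) (wscale (complex_of_real b) (complexify_W ns y)) i v"
  proof (cases "i < length ns")
    case True
    then obtain c d where c: "harm_coeffs (ns!i) c" "x i = hom_eval (ns!i) c"
      and d: "harm_coeffs (ns!i) d" "y i = hom_eval (ns!i) d"
      using x y unfolding Wsp_def Harm_def by blast
    have e: "wadd (wscale a x) (wscale b y) i = hom_eval (ns!i) (\<lambda>z. a * c z + b * d z)"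
      unfolding wadd_def wscale_def c(2) d(2) hom_eval_lin by simp
    have "complexify_H (ns!i) (wadd (wscale a x) (wscale b y) i) v
        = hom_eval (ns!i) (\<lambda>z. complex_of_real a * complex_of_real (c z) + complex_of_real b * complex_of_real (d z)) v"
      unfolding e complexify_H_eq[OF harm_coeffs_lin[OF c(1) d(1)]] by simp
    also have "\<dots> = complex_of_real a * complexify_H (ns!i) (x i) v + complex_of_real b * complexify_H (ns!i) (y i) v"
      unfolding hom_eval_lin c(2) d(2) complexify_H_eq[OF c(1)] complexify_H_eq[OF d(1)] ..
    finally show ?thesis using True unfolding complexify_W_def wadd_def wscale_def by simp
  next
    case False thus ?thesis unfolding complexify_W_def wadd_def wscale_def by simp
  qed
qed

lemma reW_cW: assumes w: "w \<in> Wsp ns" shows "reW (complexify_W ns w) = w"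
proof (rule ext, rule ext)
  fix i u show "reW (complexify_W ns w) i u = w i u" unfolding reW_def cW_vR[OF w] by simp
qed

lemma imW_cW: assumes w: "w \<in> Wsp ns" shows "imW (complexify_W ns w) = (\<lambda>i u. 0)"
proof (rule ext, rule ext)
  fix i u show "imW (complexify_W ns w) i u = 0" unfolding imW_def cW_vR[OF w] by simp
qed

lemma gC_mult: "gC g ** gC h = gC (g ** h)"
  by (simp add: vec_eq_iff matrix_matrix_mult_def gC_def)

lemma gC_transpose: "transpose (gC g) = gC (transpose g)"
  by (simp add: vec_eq_iff transpose_def gC_def)

lemma gC_mat1: "gC (mat 1) = mat 1"
  by (simp add: vec_eq_iff mat_def gC_def)

lemma gC_SO3: assumes "g \<in> SO3" shows "gC g \<in> SO3"
proof -
  have "transpose (gC g) ** gC g = mat 1"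
    using assms unfolding SO3_def by (simp add: gC_transpose gC_mult gC_mat1)
  moreover have "det (gC g) = complex_of_real (det g)" by (simp add: det_3)
  ultimately show ?thesis using assms unfolding SO3_def by simp
qed

lemma gC_vR: "gC g *v vR u = vR (g *v u)"
  by (simp add: vec_eq_iff matrix_vector_mult_def)

lemma cW_wact:
  assumes g: "g \<in> SO3" and w: "w \<in> Wsp ns"
  shows "complexify_W ns (wact g w) = wact (gC g) (complexify_W ns w)"
proof (rule ext)
  fix i
  show "complexify_W ns (wact g w) i = wact (gC g) (complexify_W ns w) i"
  proof (cases "i < length ns")
    case True
    have f: "w i \<in> Harm (ns!i)" using w True unfolding Wsp_def by auto
    have A: "transpose g ** transpose (transpose g) = mat 1" using so3_left[OF g] by simp
    have gCs: "gC g \<in> SO3" by (rule gC_SO3[OF g])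
    have AC: "transpose (gC g) ** transpose (transpose (gC g)) = mat 1" using so3_left[OF gCs] by simp
    have h1: "(\<lambda>v. w i (transpose g *v v)) \<in> Harm (ns!i)" by (rule harm_linsub[OF f A])
    have "complexify_H (ns!i) (\<lambda>v. w i (transpose g *v v)) = (\<lambda>v. complexify_H (ns!i) (w i) (transpose (gC g) *v v))"
    proof (rule Harm_unique_real)
      show "complexify_H (ns!i) (\<lambda>v. w i (transpose g *v v)) \<in> Harm (ns!i)" by (rule cH_props(1)[OF h1])
      show "(\<lambda>v. complexify_H (ns!i) (w i) (transpose (gC g) *v v)) \<in> Harm (ns!i)"
        by (rule harm_linsub[OF cH_props(1)[OF f] AC])
      show "complexify_H (ns!i) (\<lambda>v. w i (transpose g *v v)) (vR u) = complexify_H (ns!i) (w i) (transpose (gC g) *v vR u)" for u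
        unfolding gC_transpose gC_vR cH_props(2)[OF h1] cH_props(2)[OF f] ..
    qed
    thus ?thesis using True unfolding complexify_W_def wact_alt[OF g] wact_alt[OF gCs] by (simp only: if_True)
  next
    case False thus ?thesis unfolding complexify_W_def wact_def by simp
  qed
qed


abbreviation PF where "PF ns \<equiv> polyfuns (Wsp ns) wscale wadd"

lemma pf_line:
  fixes G :: "(nat \<Rightarrow> 'a::field_char_0^3 \<Rightarrow> 'a) \<Rightarrow> 'a"
  assumes G: "G \<in> PF ns" and x: "x \<in> Wsp ns" and y: "y \<in> Wsp ns"
  shows "\<exists>p. \<forall>t. G (wadd x (wscale t y)) = poly p t"
  using G
proof (induction rule: polyfuns.induct)
  case (pf_const c) show ?case by (rule exI[of _ "[:c:]"]) simp
next
  case (pf_lin l)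
  have "l (wadd x (wscale t y)) = poly [:l x, l y:] t" for t
  proof -
    have "l (wadd (wscale 1 x) (wscale t y)) = 1 * l x + t * l y"
      using pf_lin x y unfolding lin_on_def by blast
    thus ?thesis by (simp add: wscale_1)
  qed
  thus ?case by blast
next
  case (pf_add f g)
  then obtain p q where "\<forall>t. f (wadd x (wscale t y)) = poly p t" "\<forall>t. g (wadd x (wscale t y)) = poly q t" by blast
  thus ?case by (intro exI[of _ "p + q"]) simp
next
  case (pf_mult f g)
  then obtain p q where "\<forall>t. f (wadd x (wscale t y)) = poly p t" "\<forall>t. g (wadd x (wscale t y)) = poly q t" by blast
  thus ?case by (intro exI[of _ "p * q"]) simp
qed

lemma pf_real_zero:
  assumes H: "H \<in> PF ns" and z: "\<forall>w\<in>Wsp ns. H (complexify_W ns w) = 0"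
  shows "\<forall>x\<in>Wsp ns. H x = 0"
proof
  fix x :: "nat \<Rightarrow> complex^3 \<Rightarrow> complex" assume x: "x \<in> Wsp ns"
  define a where "a = complexify_W ns (reW x)"
  define b where "b = complexify_W ns (imW x)"
  have ra: "reW x \<in> Wsp ns" and rb: "imW x \<in> Wsp ns" using reW_Wsp[OF x] imW_Wsp[OF x] .
  have aW: "a \<in> Wsp ns" and bW: "b \<in> Wsp ns" unfolding a_def b_def using cW_Wsp ra rb by auto
  obtain p where p: "\<forall>t. H (wadd a (wscale t b)) = poly p t" using pf_line[OF H aW bW] by blast
  have "poly p (complex_of_real r) = 0" for r
  proof -
    have "wadd a (wscale (complex_of_real r) b) = complexify_W ns (wadd (wscale 1 (reW x)) (wscale r (imW x)))"
      unfolding cW_lin[OF ra rb] a_def b_def by (simp add: wscale_1)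
    moreover have "wadd (wscale 1 (reW x)) (wscale r (imW x)) \<in> Wsp ns" by (rule Wsp_lin[OF ra rb])
    ultimately show ?thesis using p z by metis
  qed
  hence "p = 0"
  proof -
    assume r: "\<And>r. poly p (complex_of_real r) = 0"
    show "p = 0"
    proof (rule ccontr)
      assume "p \<noteq> 0"
      hence "finite {z. poly p z = 0}" by (rule poly_roots_finite)
      moreover have "\<real> \<subseteq> {z. poly p z = 0}" using r by (auto elim: Reals_cases)
      ultimately show False using infinite_Reals_complex finite_subset by blast
    qed
  qed
  moreover have "x = wadd a (wscale \<i> b)" unfolding a_def b_def by (rule decomp[OF x])
  ultimately show "H x = 0" using p by simp
qed

lemma pf_comp_lin:
  assumes G: "G \<in> PF ns"
    and TV: "\<And>x. x \<in> Wsp ns \<Longrightarrow> T x \<in> Wsp ns"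
    and Tl: "\<And>x y a b. x \<in> Wsp ns \<Longrightarrow> y \<in> Wsp ns \<Longrightarrow> T (wadd (wscale a x) (wscale b y)) = wadd (wscale a (T x)) (wscale b (T y))"
  shows "(\<lambda>x. G (T x)) \<in> PF ns"
  using G
proof (induction rule: polyfuns.induct)
  case (pf_const c) show ?case by (rule polyfuns.pf_const)
next
  case (pf_lin l)
  have "lin_on (Wsp ns) wscale wadd (\<lambda>x. l (T x))"
    using pf_lin TV Tl unfolding lin_on_def by simp
  thus ?case by (rule polyfuns.pf_lin)
next
  case (pf_add f g) from pf_add.IH show ?case by (rule polyfuns.pf_add)
next
  case (pf_mult f g) from pf_mult.IH show ?case by (rule polyfuns.pf_mult)
qed

lemma pf_diff: "f \<in> polyfuns V sc ad \<Longrightarrow> g \<in> polyfuns V sc ad \<Longrightarrow> (\<lambda>x. f x - g x) \<in> polyfuns V sc ad"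
proof -
  assume f: "f \<in> polyfuns V sc ad" and g: "g \<in> polyfuns V sc ad"
  have "(\<lambda>x. f x + (\<lambda>_. -1) x * g x) \<in> polyfuns V sc ad"
    by (intro polyfuns.pf_add polyfuns.pf_mult polyfuns.pf_const f g)
  thus ?thesis by simp
qed

lemma ag_diff: "f \<in> alg_gen S \<Longrightarrow> g \<in> alg_gen S \<Longrightarrow> (\<lambda>x. f x - g x) \<in> alg_gen S"
proof -
  assume f: "f \<in> alg_gen S" and g: "g \<in> alg_gen S"
  have "(\<lambda>x. f x + (\<lambda>_. -1) x * g x) \<in> alg_gen S"
    by (intro alg_gen.ag_add alg_gen.ag_mult alg_gen.ag_const f g)
  thus ?thesis by simp
qed

lemma ag_mono: "f \<in> alg_gen S \<Longrightarrow> S \<subseteq> T \<Longrightarrow> f \<in> alg_gen T"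
  by (induction rule: alg_gen.induct) (auto intro: alg_gen.intros)

lemma ag_poly:
  assumes "f \<in> alg_gen S" and "\<forall>g\<in>S. in_on V g P" and "\<And>c. (\<lambda>_. c) \<in> P"
    and "\<And>f g. f \<in> P \<Longrightarrow> g \<in> P \<Longrightarrow> (\<lambda>x. f x + g x) \<in> P"
    and "\<And>f g. f \<in> P \<Longrightarrow> g \<in> P \<Longrightarrow> (\<lambda>x. f x * g x) \<in> P"
  shows "in_on V f P"
  using assms(1)
proof (induction rule: alg_gen.induct)
  case (ag_const c) show ?case unfolding in_on_def using assms(3)[of c] by (intro bexI[of _ "\<lambda>_. c"]) auto
next
  case (ag_gen f) thus ?case using assms(2) by blast
next
  case (ag_add f g)
  then obtain F G where "F \<in> P" "\<forall>w\<in>V. f w = F w" "G \<in> P" "\<forall>w\<in>V. g w = G w" unfolding in_on_def by blast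
  thus ?case unfolding in_on_def using assms(4) by (intro bexI[of _ "\<lambda>x. F x + G x"]) auto
next
  case (ag_mult f g)
  then obtain F G where "F \<in> P" "\<forall>w\<in>V. f w = F w" "G \<in> P" "\<forall>w\<in>V. g w = G w" unfolding in_on_def by blast
  thus ?case unfolding in_on_def using assms(5) by (intro bexI[of _ "\<lambda>x. F x * G x"]) auto
qed


lemma reW_lin: "reW (wadd (wscale a x) (wscale b y)) =
  wadd (wadd (wscale (Re a) (reW x)) (wscale (- Im a) (imW x))) (wadd (wscale (Re b) (reW y)) (wscale (- Im b) (imW y)))"
  by (simp add: reW_def imW_def wadd_def wscale_def fun_eq_iff)

lemma imW_lin: "imW (wadd (wscale a x) (wscale b y)) =
  wadd (wadd (wscale (Re a) (imW x)) (wscale (Im a) (reW x))) (wadd (wscale (Re b) (imW y)) (wscale (Im b) (reW y)))"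
  by (simp add: reW_def imW_def wadd_def wscale_def fun_eq_iff algebra_simps)

lemma lin4:
  assumes l: "lin_on V wscale wadd l" and V: "\<And>x y. x \<in> V \<Longrightarrow> y \<in> V \<Longrightarrow> wadd x y \<in> V" "\<And>x a. x \<in> V \<Longrightarrow> wscale a x \<in> V"
    and p: "p \<in> V" "q \<in> V" "r \<in> V" "s \<in> V"
  shows "l (wadd (wadd (wscale a p) (wscale b q)) (wadd (wscale c r) (wscale d s))) = a * l p + b * l q + c * l r + d * l s"
  using p V lin_add[OF l] lin_scale[OF l] by (simp add: algebra_simps)

lemma pf_extend:
  fixes G :: "(nat \<Rightarrow> real^3 \<Rightarrow> real) \<Rightarrow> real"
  assumes G: "G \<in> PF ns"
  shows "\<exists>H \<in> PF ns. \<forall>w\<in>Wsp ns. H (complexify_W ns w) = complex_of_real (G w)"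
  using G
proof (induction rule: polyfuns.induct)
  case (pf_const c) show ?case by (intro bexI[of _ "\<lambda>_. complex_of_real c"] polyfuns.pf_const) simp
next
  case (pf_lin l)
  define H where "H x = complex_of_real (l (reW x)) + \<i> * complex_of_real (l (imW x))" for x
  have VR: "\<And>x y. x \<in> Wsp ns \<Longrightarrow> y \<in> Wsp ns \<Longrightarrow> wadd x y \<in> Wsp ns" "\<And>x a. x \<in> Wsp ns \<Longrightarrow> wscale a x \<in> Wsp ns"
    by (auto intro: Wsp_add Wsp_scale)
  have "lin_on (Wsp ns) wscale wadd H"
    unfolding lin_on_def
  proof (intro ballI allI)
    fix x y :: "nat \<Rightarrow> complex^3 \<Rightarrow> complex" and a b :: complex
    assume x: "x \<in> Wsp ns" and y: "y \<in> Wsp ns"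
    have m: "reW x \<in> Wsp ns" "imW x \<in> Wsp ns" "reW y \<in> Wsp ns" "imW y \<in> Wsp ns"
      using reW_Wsp imW_Wsp x y by auto
    have r: "l (reW (wadd (wscale a x) (wscale b y))) = Re a * l (reW x) + - Im a * l (imW x) + Re b * l (reW y) + - Im b * l (imW y)"
      unfolding reW_lin by (rule lin4[OF pf_lin VR m])
    have i: "l (imW (wadd (wscale a x) (wscale b y))) = Re a * l (imW x) + Im a * l (reW x) + Re b * l (imW y) + Im b * l (reW y)"
      unfolding imW_lin by (rule lin4[OF pf_lin VR m(2,1,4,3)])
    show "H (wadd (wscale a x) (wscale b y)) = a * H x + b * H y"
      unfolding H_def r i by (simp add: complex_eq_iff algebra_simps)
  qed
  moreover have "H (complexify_W ns w) = complex_of_real (l w)" if w: "w \<in> Wsp ns" for w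
  proof -
    have "imW (complexify_W ns w) = wscale 0 w" using imW_cW[OF w] by (simp add: wscale_def)
    hence "l (imW (complexify_W ns w)) = 0" using lin_scale[OF pf_lin w, of 0] by simp
    thus ?thesis unfolding H_def reW_cW[OF w] by simp
  qed
  ultimately show ?case by (intro bexI[of _ H] polyfuns.pf_lin) auto
next
  case (pf_add f g)
  then obtain F K where "F \<in> PF ns" "\<forall>w\<in>Wsp ns. F (complexify_W ns w) = complex_of_real (f w)"
    "K \<in> PF ns" "\<forall>w\<in>Wsp ns. K (complexify_W ns w) = complex_of_real (g w)" by blast
  thus ?case by (intro bexI[of _ "\<lambda>x. F x + K x"] polyfuns.pf_add) auto
next
  case (pf_mult f g)
  then obtain F K where "F \<in> PF ns" "\<forall>w\<in>Wsp ns. F (complexify_W ns w) = complex_of_real (f w)"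
    "K \<in> PF ns" "\<forall>w\<in>Wsp ns. K (complexify_W ns w) = complex_of_real (g w)" by blast
  thus ?case by (intro bexI[of _ "\<lambda>x. F x * K x"] polyfuns.pf_mult) auto
qed

lemma inv_real_rot:
  assumes H: "H \<in> PF ns"
    and inv: "\<And>g w. g \<in> SO3 \<Longrightarrow> w \<in> Wsp ns \<Longrightarrow> H (complexify_W ns (wact g w)) = H (complexify_W ns w)"
    and g: "g \<in> SO3" and x: "x \<in> Wsp ns"
  shows "H (wact (gC g) x) = H x"
proof -
  have gs: "gC g \<in> SO3" by (rule gC_SO3[OF g])
  have "(\<lambda>x. H (wact (gC g) x)) \<in> PF ns"
    by (rule pf_comp_lin[OF H]) (auto intro: Wsp_wact[OF gs] simp: wact_lin)
  hence phi: "(\<lambda>x. H (wact (gC g) x) - H x) \<in> PF ns" using pf_diff H by blast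
  have "\<forall>w\<in>Wsp ns. H (wact (gC g) (complexify_W ns w)) - H (complexify_W ns w) = 0"
  proof
    fix w :: "nat \<Rightarrow> real^3 \<Rightarrow> real" assume w: "w \<in> Wsp ns"
    show "H (wact (gC g) (complexify_W ns w)) - H (complexify_W ns w) = 0"
      using inv[OF g w] cW_wact[OF g w] by simp
  qed
  from pf_real_zero[OF phi this] x show ?thesis by simp
qed


definition zpt :: "nat \<Rightarrow> complex" where "zpt j = of_nat (Suc j)"

lemma zpt_inj: "zpt j = zpt k \<longleftrightarrow> j = k"
  unfolding zpt_def by (metis nat.inject of_nat_eq_iff)

lemma zpt_nz: "zpt j \<noteq> 0" unfolding zpt_def by (metis of_nat_0 nat.distinct(1) of_nat_eq_iff)

definition Lg :: "nat \<Rightarrow> nat \<Rightarrow> complex poly" where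
  "Lg m j = smult (1 / (\<Prod>k\<in>{..m}-{j}. (zpt j - zpt k))) (\<Prod>k\<in>{..m}-{j}. [:- zpt k, 1:])"

lemma Lg_eval: assumes "j \<le> m" "k \<le> m" shows "poly (Lg m j) (zpt k) = (if k = j then 1 else 0)"
proof -
  have P: "(\<Prod>k\<in>{..m}-{j}. (zpt j - zpt k)) \<noteq> 0"
    by (subst prod_zero_iff) (auto simp: zpt_inj)
  have e: "poly (Lg m j) x = (\<Prod>k\<in>{..m}-{j}. (x - zpt k)) / (\<Prod>k\<in>{..m}-{j}. (zpt j - zpt k))" for x
    by (simp add: Lg_def poly_prod)
  show ?thesis
  proof (cases "k = j")
    case True thus ?thesis using P e by simp
  next
    case False
    hence "(\<Prod>i\<in>{..m}-{j}. (zpt k - zpt i)) = 0" using assms by (subst prod_zero_iff) auto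
    thus ?thesis using False e by simp
  qed
qed

lemma Lg_degree: assumes "j \<le> m" shows "degree (Lg m j) \<le> m"
proof -
  have "degree (Lg m j) \<le> degree (\<Prod>k\<in>{..m}-{j}. [:- zpt k, 1:])" unfolding Lg_def by (rule degree_smult_le)
  also have "\<dots> \<le> sum (degree \<circ> (\<lambda>k. [:- zpt k, 1:])) ({..m}-{j})" by (rule degree_prod_sum_le) simp
  also have "\<dots> = card ({..m}-{j})" by simp
  also have "\<dots> = m" using assms by simp
  finally show ?thesis .
qed

lemma lagrange:
  assumes q: "degree q \<le> m"
  shows "poly q u = (\<Sum>j\<le>m. poly (Lg m j) u * poly q (zpt j))"
proof -
  define r where "r = q - (\<Sum>j\<le>m. smult (poly q (zpt j)) (Lg m j))"
  have dr: "degree r \<le> m" unfolding r_def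
    by (intro degree_diff_le q degree_sum_le) (auto intro: Lg_degree order.trans[OF degree_smult_le Lg_degree])
  have rz: "poly r (zpt k) = 0" if "k \<le> m" for k
  proof -
    have "(\<Sum>j\<le>m. poly q (zpt j) * poly (Lg m j) (zpt k)) = (\<Sum>j\<le>m. if j = k then poly q (zpt k) else 0)"
      using that by (intro sum.cong refl) (auto simp: Lg_eval)
    thus ?thesis using that by (simp add: r_def poly_sum)
  qed
  have "r = 0"
  proof (rule ccontr)
    assume "r \<noteq> 0"
    hence c: "card {x. poly r x = 0} \<le> m" using card_poly_roots_bound dr le_trans by blast
    have f: "finite {x. poly r x = 0}" using poly_roots_finite[OF \<open>r \<noteq> 0\<close>] .
    have "zpt ` {..m} \<subseteq> {x. poly r x = 0}" using rz by auto
    hence "card (zpt ` {..m}) \<le> card {x. poly r x = 0}" using card_mono f by blast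
    moreover have "card (zpt ` {..m}) = Suc m" by (subst card_image) (auto simp: inj_on_def zpt_inj)
    ultimately show False using c by simp
  qed
  hence "q = (\<Sum>j\<le>m. smult (poly q (zpt j)) (Lg m j))" unfolding r_def by simp
  hence "poly q u = poly (\<Sum>j\<le>m. smult (poly q (zpt j)) (Lg m j)) u" by simp
  thus ?thesis by (simp add: poly_sum mult.commute)
qed

definition Lau :: "(complex \<Rightarrow> complex) \<Rightarrow> bool" where
  "Lau \<phi> \<longleftrightarrow> (\<exists>p K. \<forall>u. u \<noteq> 0 \<longrightarrow> \<phi> u = poly p u / u^K)"

lemma Lau_const: "Lau (\<lambda>_. c)"
  unfolding Lau_def by (rule exI[of _ "[:c:]"], rule exI[of _ 0]) simp

lemma Lau_add: assumes "Lau f" "Lau g" shows "Lau (\<lambda>u. f u + g u)"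
proof -
  obtain p K q K' where f: "\<forall>u. u \<noteq> 0 \<longrightarrow> f u = poly p u / u^K" and g: "\<forall>u. u \<noteq> 0 \<longrightarrow> g u = poly q u / u^K'"
    using assms unfolding Lau_def by blast
  have "f u + g u = poly (p * monom 1 K' + q * monom 1 K) u / u^(K+K')" if "u \<noteq> 0" for u
    using f g that by (simp add: poly_monom field_simps power_add)
  thus ?thesis unfolding Lau_def by blast
qed

lemma Lau_mult: assumes "Lau f" "Lau g" shows "Lau (\<lambda>u. f u * g u)"
proof -
  obtain p K q K' where f: "\<forall>u. u \<noteq> 0 \<longrightarrow> f u = poly p u / u^K" and g: "\<forall>u. u \<noteq> 0 \<longrightarrow> g u = poly q u / u^K'"
    using assms unfolding Lau_def by blast
  have "f u * g u = poly (p * q) u / u^(K+K')" if "u \<noteq> 0" for u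
    using f g that by (simp add: power_add)
  thus ?thesis unfolding Lau_def by blast
qed

lemma Lau_zero:
  assumes L: "Lau f" and S: "infinite S" "0 \<notin> S" and z: "\<forall>u\<in>S. f u = 0"
  shows "\<forall>u. u \<noteq> 0 \<longrightarrow> f u = 0"
proof -
  obtain p K where p: "\<forall>u. u \<noteq> 0 \<longrightarrow> f u = poly p u / u^K" using L unfolding Lau_def by blast
  have "p = 0"
  proof (rule ccontr)
    assume "p \<noteq> 0"
    hence "finite {u. poly p u = 0}" by (rule poly_roots_finite)
    moreover have "S \<subseteq> {u. poly p u = 0}"
    proof
      fix u assume u: "u \<in> S"
      hence "u \<noteq> 0" using S(2) by auto
      hence "poly p u / u^K = 0" using z p u by metis
      thus "u \<in> {u. poly p u = 0}" using \<open>u \<noteq> 0\<close> by simp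
    qed
    ultimately show False using S(1) finite_subset by blast
  qed
  thus ?thesis using p by simp
qed

definition zeroW :: "nat \<Rightarrow> complex^3 \<Rightarrow> complex" where "zeroW = (\<lambda>i v. 0)"

lemma zeroW_Wsp: "zeroW \<in> Wsp ns"
  unfolding Wsp_def zeroW_def using Harm_zero by auto

lemma lin_sum:
  fixes l :: "(nat \<Rightarrow> complex^3 \<Rightarrow> complex) \<Rightarrow> complex"
  assumes l: "lin_on (Wsp ns) wscale wadd l" and J: "finite J" and Y: "\<And>j. j \<in> J \<Longrightarrow> Y j \<in> Wsp ns"
  shows "(\<lambda>i v. \<Sum>j\<in>J. a j * Y j i v) \<in> Wsp ns \<and> l (\<lambda>i v. \<Sum>j\<in>J. a j * Y j i v) = (\<Sum>j\<in>J. a j * l (Y j))"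
  using J Y
proof (induction J rule: finite_induct)
  case empty
  have "(\<lambda>i v. 0::complex) = wscale 0 zeroW" by (simp add: wscale_def zeroW_def)
  moreover have "l (wscale 0 zeroW) = 0" using lin_scale[OF l zeroW_Wsp, of 0] by simp
  ultimately show ?case using zeroW_Wsp by (simp add: zeroW_def)
next
  case (insert x F)
  have e: "(\<lambda>i v. \<Sum>j\<in>insert x F. a j * Y j i v) = wadd (wscale (a x) (Y x)) (\<lambda>i v. \<Sum>j\<in>F. a j * Y j i v)"
    using insert by (simp add: wadd_def wscale_def)
  have m: "Y x \<in> Wsp ns" "(\<lambda>i v. \<Sum>j\<in>F. a j * Y j i v) \<in> Wsp ns" using insert by auto
  show ?case unfolding e using m insert lin_add[OF l Wsp_scale[OF m(1)] m(2)] lin_scale[OF l m(1)]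
    by (auto intro: Wsp_add Wsp_scale)
qed

lemma pf_Lau:
  assumes H: "H \<in> PF ns"
    and X: "\<And>u. u \<noteq> 0 \<Longrightarrow> X u \<in> Wsp ns"
    and D: "\<And>i v. \<exists>q. degree q \<le> 2*D \<and> (\<forall>u. u \<noteq> 0 \<longrightarrow> X u i v = poly q u / u^D)"
  shows "Lau (\<lambda>u. H (X u))"
proof -
  define m where "m = 2*D"
  define Y where "Y j = X (zpt j)" for j
  have Y: "Y j \<in> Wsp ns" for j unfolding Y_def by (rule X[OF zpt_nz])
  define a where "a u j = poly (Lg m j) u * zpt j ^ D / u ^ D" for u j
  have rep: "X u = (\<lambda>i v. \<Sum>j\<le>m. a u j * Y j i v)" if u: "u \<noteq> 0" for u
  proof (rule ext, rule ext)
    fix i v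
    obtain q where q: "degree q \<le> m" "\<forall>u. u \<noteq> 0 \<longrightarrow> X u i v = poly q u / u^D" using D[of i v] m_def by blast
    have qz: "poly q (zpt j) = zpt j ^ D * Y j i v" for j
    proof -
      have "Y j i v = poly q (zpt j) / zpt j ^ D" unfolding Y_def using q(2) zpt_nz[of j] by blast
      thus ?thesis using zpt_nz[of j] by simp
    qed
    have "X u i v = poly q u / u^D" using q(2) u by blast
    also have "poly q u = (\<Sum>j\<le>m. poly (Lg m j) u * poly q (zpt j))" by (rule lagrange[OF q(1)])
    finally have "X u i v = (\<Sum>j\<le>m. poly (Lg m j) u * poly q (zpt j)) / u^D" .
    also have "\<dots> = (\<Sum>j\<le>m. a u j * Y j i v)" unfolding qz a_def by (simp add: sum_divide_distrib mult_ac)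
    finally show "X u i v = (\<Sum>j\<le>m. a u j * Y j i v)" .
  qed
  show ?thesis using H
  proof (induction rule: polyfuns.induct)
    case (pf_const c) show ?case by (rule Lau_const)
  next
    case (pf_lin l)
    have "l (X u) = poly (\<Sum>j\<le>m. smult (zpt j ^ D * l (Y j)) (Lg m j)) u / u^D" if u: "u \<noteq> 0" for u
    proof -
      have "l (X u) = (\<Sum>j\<le>m. a u j * l (Y j))" unfolding rep[OF u] using lin_sum[OF pf_lin, of "{..m}" Y] Y by blast
      also have "\<dots> = poly (\<Sum>j\<le>m. smult (zpt j ^ D * l (Y j)) (Lg m j)) u / u^D"
        unfolding a_def by (simp add: poly_sum sum_divide_distrib mult_ac)
      finally show ?thesis .
    qed
    thus ?case unfolding Lau_def by blast
  next
    case (pf_add f g) from pf_add.IH show ?case by (rule Lau_add)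
  next
    case (pf_mult f g) from pf_mult.IH show ?case by (rule Lau_mult)
  qed
qed


definition Mq :: "complex^3^3 \<Rightarrow> complex^3^3 \<Rightarrow> complex^3^3 \<Rightarrow> complex \<Rightarrow> complex^3^3" where
  "Mq A B C u = (\<chi> i j. (A$i$j * u^2 + B$i$j * u + C$i$j) / u)"

lemma Mq_tv: assumes u: "u \<noteq> 0"
  shows "(transpose (Mq A B C u) *v v) $ k =
     poly [:(\<Sum>j\<in>UNIV. C$j$k * v$j), (\<Sum>j\<in>UNIV. B$j$k * v$j), (\<Sum>j\<in>UNIV. A$j$k * v$j):] u / u"
proof -
  have "(transpose (Mq A B C u) *v v) $ k = (\<Sum>j\<in>UNIV. (A$j$k * u^2 + B$j$k * u + C$j$k) * v$j) / u"
    by (simp add: Mq_def matrix_vector_mult_def transpose_def sum_divide_distrib)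
  also have "(\<Sum>j\<in>UNIV. (A$j$k * u^2 + B$j$k * u + C$j$k) * v$j) =
     (\<Sum>j\<in>UNIV. C$j$k * v$j) + u * ((\<Sum>j\<in>UNIV. B$j$k * v$j) + u * (\<Sum>j\<in>UNIV. A$j$k * v$j))"
    by (simp add: sum_distrib_left sum.distrib[symmetric] algebra_simps power2_eq_square)
  finally show ?thesis by simp
qed

lemma hom_eval_frac:
  assumes deg: "\<forall>a b e. c(a,b,e) \<noteq> 0 \<longrightarrow> a + b + e = n" and u: "u \<noteq> 0"
  shows "hom_eval n c (\<chi> k. poly (Q k) u / u) =
     poly (\<Sum>a\<le>n. \<Sum>b\<le>n. \<Sum>e\<le>n. smult (c(a,b,e)) (Q 1 ^ a * Q 2 ^ b * Q 3 ^ e)) u / u^n"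
  unfolding hom_eval_def poly_sum sum_divide_distrib
proof (intro sum.cong refl)
  fix a b e
  show "c (a, b, e) * (\<chi> k. poly (Q k) u / u) $ 1 ^ a * (\<chi> k. poly (Q k) u / u) $ 2 ^ b * (\<chi> k. poly (Q k) u / u) $ 3 ^ e =
        poly (smult (c (a, b, e)) (Q 1 ^ a * Q 2 ^ b * Q 3 ^ e)) u / u ^ n"
  proof (cases "c(a,b,e) = 0")
    case False
    hence n: "n = a + b + e" using deg by auto
    show ?thesis unfolding n using u by (simp add: power_divide power_add field_simps)
  qed simp
qed

lemma degree_term: fixes Q :: "3 \<Rightarrow> complex poly" assumes "\<And>k. degree (Q k) \<le> 2" and "c \<noteq> 0 \<longrightarrow> a + b + e = n"
  shows "degree (smult c (Q 1 ^ a * Q 2 ^ b * Q 3 ^ e)) \<le> 2 * n"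
proof (cases "c = 0")
  case False
  have "degree (Q 1 ^ a * Q 2 ^ b * Q 3 ^ e) \<le> degree (Q 1 ^ a) + degree (Q 2 ^ b) + degree (Q 3 ^ e)"
    by (meson add_mono_thms_linordered_semiring(3) degree_mult_le order.trans)
  also have "\<dots> \<le> a * 2 + b * 2 + e * 2"
    by (intro add_mono order.trans[OF degree_power_le] mult_left_mono) (auto simp: mult.commute assms(1))
  finally show ?thesis using False assms(2) by (simp add: degree_smult_eq)
qed simp

lemma curve_deg:
  assumes x: "x \<in> Wsp ns" and M: "\<And>u. u \<noteq> 0 \<Longrightarrow> Mq A B C u \<in> SO3"
  shows "\<exists>q. degree q \<le> 2 * sum_list ns \<and> (\<forall>u. u \<noteq> 0 \<longrightarrow> wact (Mq A B C u) x i v = poly q u / u ^ sum_list ns)"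
proof (cases "i < length ns")
  case False
  hence "x i = (\<lambda>_. 0)" using x unfolding Wsp_def by auto
  thus ?thesis by (intro exI[of _ 0]) (simp add: wact_def)
next
  case True
  define n where "n = ns ! i"
  define D where "D = sum_list ns"
  have nD: "n \<le> D" unfolding n_def D_def using True by (simp add: member_le_sum_list)
  obtain c where c: "harm_coeffs n c" "x i = hom_eval n c" using x True unfolding Wsp_def Harm_def n_def by blast
  have deg: "\<forall>a b e. c(a,b,e) \<noteq> 0 \<longrightarrow> a + b + e = n" using c(1) unfolding harm_coeffs_def by blast
  define Q where "Q k = [:(\<Sum>j\<in>UNIV. C$j$k * v$j), (\<Sum>j\<in>UNIV. B$j$k * v$j), (\<Sum>j\<in>UNIV. A$j$k * v$j):]" for k
  have dQ: "degree (Q k) \<le> 2" for k unfolding Q_def by (simp add: degree_pCons_le)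
  define q0 where "q0 = (\<Sum>a\<le>n. \<Sum>b\<le>n. \<Sum>e\<le>n. smult (c(a,b,e)) (Q 1 ^ a * Q 2 ^ b * Q 3 ^ e))"
  have dq0: "degree q0 \<le> 2 * n" unfolding q0_def
    by (intro degree_sum_le degree_term dQ) (use deg in auto)
  define q where "q = q0 * monom 1 (D - n)"
  have "degree q \<le> degree q0 + degree (monom (1::complex) (D - n))" unfolding q_def by (rule degree_mult_le)
  also have "\<dots> \<le> 2 * n + (D - n)" using dq0 degree_monom_le[of "1::complex" "D - n"] by linarith
  also have "\<dots> \<le> 2 * D" using nD by linarith
  finally have dq: "degree q \<le> 2 * D" .
  have "wact (Mq A B C u) x i v = poly q u / u ^ D" if u: "u \<noteq> 0" for u
  proof -
    have tv: "transpose (Mq A B C u) *v v = (\<chi> k. poly (Q k) u / u)"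
    proof (subst vec_eq_iff, rule allI)
      fix k show "(transpose (Mq A B C u) *v v) $ k = (\<chi> k. poly (Q k) u / u) $ k"
        unfolding vec_lambda_beta Q_def by (rule Mq_tv[OF u])
    qed
    have "wact (Mq A B C u) x i v = hom_eval n c (\<chi> k. poly (Q k) u / u)"
      unfolding wact_alt[OF M[OF u]] tv c(2) ..
    also have "\<dots> = poly q0 u / u^n" unfolding q0_def by (rule hom_eval_frac[OF deg u])
    also have "\<dots> = poly q u / u^D" unfolding q_def using u nD
      by (simp add: poly_monom field_simps power_add[symmetric])
    finally show ?thesis .
  qed
  thus ?thesis using dq unfolding D_def by blast
qed


definition rzm :: "'a::field \<Rightarrow> 'a \<Rightarrow> 'a^3^3" where
  "rzm c s = vector [vector [c, -s, 0], vector [s, c, 0], vector [0, 0, 1]]"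
definition rxm :: "'a::field \<Rightarrow> 'a \<Rightarrow> 'a^3^3" where
  "rxm c s = vector [vector [1, 0, 0], vector [0, c, -s], vector [0, s, c]]"

lemma rzm_nth: "rzm c s $ 1 $ 1 = c" "rzm c s $ 1 $ 2 = -s" "rzm c s $ 1 $ 3 = 0"
  "rzm c s $ 2 $ 1 = s" "rzm c s $ 2 $ 2 = c" "rzm c s $ 2 $ 3 = 0"
  "rzm c s $ 3 $ 1 = 0" "rzm c s $ 3 $ 2 = 0" "rzm c s $ 3 $ 3 = 1"
  by (simp_all add: rzm_def)

lemma rxm_nth: "rxm c s $ 1 $ 1 = 1" "rxm c s $ 1 $ 2 = 0" "rxm c s $ 1 $ 3 = 0"
  "rxm c s $ 2 $ 1 = 0" "rxm c s $ 2 $ 2 = c" "rxm c s $ 2 $ 3 = -s"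
  "rxm c s $ 3 $ 1 = 0" "rxm c s $ 3 $ 2 = s" "rxm c s $ 3 $ 3 = c"
  by (simp_all add: rxm_def)

lemma mat_eq3: "(A::'a^3^3) = B \<longleftrightarrow>
  A$1$1 = B$1$1 \<and> A$1$2 = B$1$2 \<and> A$1$3 = B$1$3 \<and>
  A$2$1 = B$2$1 \<and> A$2$2 = B$2$2 \<and> A$2$3 = B$2$3 \<and>
  A$3$1 = B$3$1 \<and> A$3$2 = B$3$2 \<and> A$3$3 = B$3$3"
  by (simp add: vec_eq_iff forall_3)

lemma mmult3: "((A::'a::semiring_1^3^3) ** B) $ i $ j = A$i$1 * B$1$j + A$i$2 * B$2$j + A$i$3 * B$3$j"
  by (simp add: matrix_matrix_mult_def sum_3)

lemma mat1_3: "(mat 1 :: 'a::semiring_1^3^3) $ i $ j = (if i = j then 1 else 0)"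
  by (simp add: mat_def)

lemma rzm_SO3: assumes "c^2 + s^2 = 1" shows "rzm c s \<in> SO3"
proof -
  have "transpose (rzm c s) ** rzm c s = mat 1"
    using assms unfolding mat_eq3 by (simp add: mmult3 transpose_def rzm_nth mat1_3 power2_eq_square add.commute)
  moreover have "det (rzm c s) = 1" using assms by (simp add: det_3 rzm_nth power2_eq_square add.commute)
  ultimately show ?thesis unfolding SO3_def by simp
qed

lemma rxm_SO3: assumes "c^2 + s^2 = 1" shows "rxm c s \<in> SO3"
proof -
  have "transpose (rxm c s) ** rxm c s = mat 1"
    using assms unfolding mat_eq3 by (simp add: mmult3 transpose_def rxm_nth mat1_3 power2_eq_square add.commute)
  moreover have "det (rxm c s) = 1" using assms by (simp add: det_3 rxm_nth power2_eq_square add.commute)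
  ultimately show ?thesis unfolding SO3_def by simp
qed

lemma rzm_transpose: "transpose (rzm c s) = rzm c (-s)"
  unfolding mat_eq3 by (simp add: transpose_def rzm_nth)
lemma rxm_transpose: "transpose (rxm c s) = rxm c (-s)"
  unfolding mat_eq3 by (simp add: transpose_def rxm_nth)

lemma gC_rzm: "gC (rzm a b) = rzm (complex_of_real a) (complex_of_real b)"
  unfolding mat_eq3 by (simp add: rzm_nth)
lemma gC_rxm: "gC (rxm a b) = rxm (complex_of_real a) (complex_of_real b)"
  unfolding mat_eq3 by (simp add: rxm_nth)

definition ccu :: "complex \<Rightarrow> complex" where "ccu u = (u^2 + 1) / (2 * u)"
definition ssu :: "complex \<Rightarrow> complex" where "ssu u = (u^2 - 1) / (2 * \<i> * u)"

lemma ccss: "u \<noteq> 0 \<Longrightarrow> (ccu u)^2 + (ssu u)^2 = 1"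
  by (simp add: ccu_def ssu_def field_simps power2_eq_square)

lemma ccss_inv: assumes "c^2 + s^2 = (1::complex)"
  shows "c + \<i> * s \<noteq> 0" "ccu (c + \<i> * s) = c" "ssu (c + \<i> * s) = s"
proof -
  have p: "(c + \<i> * s) * (c - \<i> * s) = 1" using assms by (simp add: algebra_simps power2_eq_square)
  thus nz: "c + \<i> * s \<noteq> 0" by auto
  have inv: "1 / (c + \<i> * s) = c - \<i> * s" using p nz by (simp add: field_simps)
  have e1: "ccu (c + \<i> * s) = ((c + \<i> * s) + 1 / (c + \<i> * s)) / 2"
    unfolding ccu_def using nz by (simp add: field_simps power2_eq_square)
  show "ccu (c + \<i> * s) = c" unfolding e1 inv by simp
  have e2: "ssu (c + \<i> * s) = ((c + \<i> * s) - 1 / (c + \<i> * s)) / (2 * \<i>)"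
    unfolding ssu_def using nz by (simp add: field_simps power2_eq_square)
  show "ssu (c + \<i> * s) = s" unfolding e2 inv by (simp add: field_simps)
qed

lemma ccss_circle: assumes "cmod u = 1"
  shows "ccu u = complex_of_real (Re u)" "ssu u = complex_of_real (Im u)" "(Re u)^2 + (Im u)^2 = 1"
proof -
  have nz: "u \<noteq> 0" using assms by auto
  have "u * cnj u = 1" using assms by (simp add: complex_mult_cnj cmod_def)
  hence inv: "1 / u = cnj u" using nz by (simp add: field_simps)
  have e1: "ccu u = (u + 1 / u) / 2" unfolding ccu_def using nz by (simp add: field_simps power2_eq_square)
  show "ccu u = complex_of_real (Re u)" unfolding e1 inv using complex_add_cnj[of u] by simp
  have e2: "ssu u = (u - 1 / u) / (2 * \<i>)" unfolding ssu_def using nz by (simp add: field_simps power2_eq_square)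
  show "ssu u = complex_of_real (Im u)" unfolding e2 inv using complex_diff_cnj[of u] by (simp add: field_simps)
  show "(Re u)^2 + (Im u)^2 = 1" using assms by (simp add: cmod_def)
qed

lemma circle_infinite: "infinite {u::complex. cmod u = 1}"
proof
  assume "finite {u::complex. cmod u = 1}"
  hence f: "finite (Re ` {u::complex. cmod u = 1})" by simp
  have "{-1..1::real} \<subseteq> Re ` {u::complex. cmod u = 1}"
  proof
    fix t :: real assume t: "t \<in> {-1..1}"
    hence "t^2 \<le> 1" by (simp add: abs_le_square_iff[symmetric] abs_le_iff power2_eq_square) (smt (verit) mult_le_one mult_minus_left mult_minus_right)
    hence "cmod (Complex t (sqrt (1 - t^2))) = 1" by (simp add: cmod_def)
    thus "t \<in> Re ` {u::complex. cmod u = 1}" by (intro image_eqI[of _ _ "Complex t (sqrt (1 - t^2))"]) auto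
  qed
  hence "finite {-1..1::real}" using f finite_subset by blast
  thus False using infinite_Icc[of "-1::real" 1] by simp
qed

definition Azm :: "complex^3^3" where "Azm = vector [vector [1/2, -1/(2*\<i>), 0], vector [1/(2*\<i>), 1/2, 0], vector [0,0,0]]"
definition Bzm :: "complex^3^3" where "Bzm = vector [vector [0,0,0], vector [0,0,0], vector [0,0,1]]"
definition Czm :: "complex^3^3" where "Czm = vector [vector [1/2, 1/(2*\<i>), 0], vector [-1/(2*\<i>), 1/2, 0], vector [0,0,0]]"
definition Axm :: "complex^3^3" where "Axm = vector [vector [0,0,0], vector [0, 1/2, -1/(2*\<i>)], vector [0, 1/(2*\<i>), 1/2]]"
definition Bxm :: "complex^3^3" where "Bxm = vector [vector [1,0,0], vector [0,0,0], vector [0,0,0]]"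
definition Cxm :: "complex^3^3" where "Cxm = vector [vector [0,0,0], vector [0, 1/2, 1/(2*\<i>)], vector [0, -1/(2*\<i>), 1/2]]"

lemma Mz_eq: "u \<noteq> 0 \<Longrightarrow> Mq Azm Bzm Czm u = rzm (ccu u) (ssu u)"
  unfolding mat_eq3 by (simp add: Mq_def Azm_def Bzm_def Czm_def rzm_nth ccu_def ssu_def field_simps power2_eq_square)

lemma Mx_eq: "u \<noteq> 0 \<Longrightarrow> Mq Axm Bxm Cxm u = rxm (ccu u) (ssu u)"
  unfolding mat_eq3 by (simp add: Mq_def Axm_def Bxm_def Cxm_def rxm_nth ccu_def ssu_def field_simps power2_eq_square)


lemma inv_Mq:
  assumes Hp: "H \<in> PF ns" and RI: "\<forall>g\<in>SO3. \<forall>x\<in>Wsp ns. H (wact (gC g) x) = H x"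
    and M: "\<forall>u. u \<noteq> 0 \<longrightarrow> Mq A B C u \<in> SO3"
    and R: "\<forall>u. cmod u = 1 \<longrightarrow> (\<exists>g\<in>SO3. Mq A B C u = gC g)"
    and u: "u \<noteq> 0" and x: "x \<in> Wsp ns"
  shows "H (wact (Mq A B C u) x) = H x"
proof -
  have L: "Lau (\<lambda>u. H (wact (Mq A B C u) x))"
  proof (rule pf_Lau[OF Hp])
    show "\<And>u. u \<noteq> 0 \<Longrightarrow> wact (Mq A B C u) x \<in> Wsp ns" using M Wsp_wact x by blast
    show "\<And>i v. \<exists>q. degree q \<le> 2 * sum_list ns \<and> (\<forall>u. u \<noteq> 0 \<longrightarrow> wact (Mq A B C u) x i v = poly q u / u ^ sum_list ns)"
      using curve_deg[OF x] M by blast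
  qed
  have L2: "Lau (\<lambda>u. H (wact (Mq A B C u) x) + - H x)" by (rule Lau_add[OF L Lau_const])
  have "\<forall>u. u \<noteq> 0 \<longrightarrow> H (wact (Mq A B C u) x) + - H x = 0"
  proof (rule Lau_zero[OF L2 circle_infinite])
    show "0 \<notin> {u::complex. cmod u = 1}" by simp
    show "\<forall>u\<in>{u. cmod u = 1}. H (wact (Mq A B C u) x) + - H x = 0"
    proof
      fix u :: complex assume "u \<in> {u. cmod u = 1}"
      then obtain g where "g \<in> SO3" "Mq A B C u = gC g" using R by auto
      thus "H (wact (Mq A B C u) x) + - H x = 0" using RI x by simp
    qed
  qed
  thus ?thesis using u by simp
qed

lemma inv_rz:
  assumes Hp: "H \<in> PF ns" and RI: "\<forall>g\<in>SO3. \<forall>x\<in>Wsp ns. H (wact (gC g) x) = H x"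
    and cs: "c^2 + s^2 = 1" and x: "x \<in> Wsp ns"
  shows "H (wact (rzm c s) x) = H x"
proof -
  have M: "\<forall>u. u \<noteq> 0 \<longrightarrow> Mq Azm Bzm Czm u \<in> SO3" using Mz_eq ccss rzm_SO3 by metis
  have R: "\<forall>u. cmod u = 1 \<longrightarrow> (\<exists>g\<in>SO3. Mq Azm Bzm Czm u = gC g)"
  proof (intro allI impI)
    fix u :: complex assume u: "cmod u = 1"
    hence "u \<noteq> 0" by auto
    hence "Mq Azm Bzm Czm u = gC (rzm (Re u) (Im u))" using Mz_eq ccss_circle[OF u] gC_rzm by simp
    moreover have "rzm (Re u) (Im u) \<in> SO3" using rzm_SO3 ccss_circle(3)[OF u] by blast
    ultimately show "\<exists>g\<in>SO3. Mq Azm Bzm Czm u = gC g" by blast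
  qed
  have "rzm c s = Mq Azm Bzm Czm (c + \<i> * s)" using Mz_eq ccss_inv[OF cs] by simp
  thus ?thesis using inv_Mq[OF Hp RI M R ccss_inv(1)[OF cs] x] by simp
qed

lemma inv_rx:
  assumes Hp: "H \<in> PF ns" and RI: "\<forall>g\<in>SO3. \<forall>x\<in>Wsp ns. H (wact (gC g) x) = H x"
    and cs: "c^2 + s^2 = 1" and x: "x \<in> Wsp ns"
  shows "H (wact (rxm c s) x) = H x"
proof -
  have M: "\<forall>u. u \<noteq> 0 \<longrightarrow> Mq Axm Bxm Cxm u \<in> SO3" using Mx_eq ccss rxm_SO3 by metis
  have R: "\<forall>u. cmod u = 1 \<longrightarrow> (\<exists>g\<in>SO3. Mq Axm Bxm Cxm u = gC g)"
  proof (intro allI impI)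
    fix u :: complex assume u: "cmod u = 1"
    hence "u \<noteq> 0" by auto
    hence "Mq Axm Bxm Cxm u = gC (rxm (Re u) (Im u))" using Mx_eq ccss_circle[OF u] gC_rxm by simp
    moreover have "rxm (Re u) (Im u) \<in> SO3" using rxm_SO3 ccss_circle(3)[OF u] by blast
    ultimately show "\<exists>g\<in>SO3. Mq Axm Bxm Cxm u = gC g" by blast
  qed
  have "rxm c s = Mq Axm Bxm Cxm (c + \<i> * s)" using Mx_eq ccss_inv[OF cs] by simp
  thus ?thesis using inv_Mq[OF Hp RI M R ccss_inv(1)[OF cs] x] by simp
qed


lemma rxm_mult: "(rxm c s ** g) $ 1 $ j = g$1$j" "(rxm c s ** g) $ 2 $ j = c * g$2$j - s * g$3$j"
  "(rxm c s ** g) $ 3 $ j = s * g$2$j + c * g$3$j"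
  by (simp_all add: mmult3 rxm_nth)

lemma rzm_mult: "(rzm c s ** g) $ 1 $ j = c * g$1$j - s * g$2$j" "(rzm c s ** g) $ 2 $ j = s * g$1$j + c * g$2$j"
  "(rzm c s ** g) $ 3 $ j = g$3$j"
  by (simp_all add: mmult3 rzm_nth)

lemma orth_entry: "g \<in> SO3 \<Longrightarrow> g$1$i * g$1$j + g$2$i * g$2$j + g$3$i * g$3$j = (if i = j then 1 else 0)"
  using arg_cong[OF so3_left, of g "\<lambda>M. M$i$j"] by (simp add: mmult3 transpose_def mat1_3)

lemma col3: "g \<in> SO3 \<Longrightarrow> (g$1$3)^2 + (g$2$3)^2 + (g$3$3)^2 = 1"
  using orth_entry[of g 3 3] by (simp add: power2_eq_square)

lemma k_rz:
  fixes k :: "complex^3^3"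
  assumes k: "k \<in> SO3" and z: "k$1$3 = 0" "k$2$3 = 0" "k$3$3 = 1"
  shows "k = rzm (k$1$1) (k$2$1) \<and> (k$1$1)^2 + (k$2$1)^2 = 1"
proof -
  have a: "k$3$1 = 0" using orth_entry[OF k, of 1 3] z by simp
  have b: "k$3$2 = 0" using orth_entry[OF k, of 2 3] z by simp
  have n1: "k$1$1 * k$1$1 + k$2$1 * k$2$1 = 1" using orth_entry[OF k, of 1 1] a by simp
  have o12: "k$1$1 * k$1$2 + k$2$1 * k$2$2 = 0" using orth_entry[OF k, of 1 2] a b by simp
  have d: "k$1$1 * k$2$2 - k$1$2 * k$2$1 = 1" using k a b z unfolding SO3_def by (simp add: det_3)
  have c1: "k$1$2 = - k$2$1"
  proof -
    have "k$1$2 = k$1$2 * (k$1$1 * k$1$1 + k$2$1 * k$2$1)" using n1 by simp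
    also have "\<dots> = k$1$1 * (k$1$1 * k$1$2 + k$2$1 * k$2$2) - k$2$1 * (k$1$1 * k$2$2 - k$1$2 * k$2$1)"
      by (simp add: algebra_simps)
    also have "\<dots> = - k$2$1" using o12 d by simp
    finally show ?thesis .
  qed
  have c2: "k$2$2 = k$1$1"
  proof -
    have "k$2$2 = k$2$2 * (k$1$1 * k$1$1 + k$2$1 * k$2$1)" using n1 by simp
    also have "\<dots> = k$1$1 * (k$1$1 * k$2$2 - k$1$2 * k$2$1) + k$2$1 * (k$1$1 * k$1$2 + k$2$1 * k$2$2)"
      by (simp add: algebra_simps)
    also have "\<dots> = k$1$1" using o12 d by simp
    finally show ?thesis .
  qed
  show ?thesis unfolding mat_eq3 using a b z c1 c2 n1 by (simp add: rzm_nth power2_eq_square)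
qed

lemma orth_cancel: "X \<in> SO3 \<Longrightarrow> transpose X ** (X ** h) = h"
  by (simp add: matrix_mul_assoc so3_left matrix_mul_lid)

lemma so3_gen:
  fixes g :: "complex^3^3"
  assumes cl: "\<And>a b. a \<in> Inv \<Longrightarrow> b \<in> Inv \<Longrightarrow> a ** b \<in> Inv"
    and z: "\<And>c s. c^2 + s^2 = 1 \<Longrightarrow> rzm c s \<in> Inv"
    and x: "\<And>c s. c^2 + s^2 = 1 \<Longrightarrow> rxm c s \<in> Inv"
    and g: "g \<in> SO3"
  shows "g \<in> Inv"
proof -
  have "\<exists>c s. c^2 + s^2 = (1::complex) \<and> ((rxm c s ** g)$1$3)^2 + ((rxm c s ** g)$2$3)^2 \<noteq> 0"
  proof -
    define v1 v2 v3 where "v1 = g$1$3" and "v2 = g$2$3" and "v3 = g$3$3"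
    have nrm: "v1^2 + v2^2 + v3^2 = 1" using col3[OF g] unfolding v1_def v2_def v3_def .
    show ?thesis
    proof (cases "v1^2 + v2^2 = 0")
      case False thus ?thesis by (intro exI[of _ 1] exI[of _ 0]) (simp add: rxm_mult v1_def v2_def)
    next
      case T1: True
      show ?thesis
      proof (cases "v1^2 + v3^2 = 0")
        case False thus ?thesis by (intro exI[of _ 0] exI[of _ 1]) (simp add: rxm_mult v1_def v3_def)
      next
        case T2: True
        have v3: "v3^2 = 1" using nrm T1 by simp
        have v1: "v1^2 = -1"
        proof -
          have "v1^2 = (v1^2 + v3^2) - v3^2" by simp
          also have "\<dots> = -1" using T2 v3 by simp
          finally show ?thesis .
        qed
        have v2: "v2^2 = 1"
        proof -
          have "v2^2 = (v1^2 + v2^2) - v1^2" by simp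
          also have "\<dots> = 1" using T1 v1 by simp
          finally show ?thesis .
        qed
        have ex: "((3/5) * v2 - (4/5) * v3)^2 = 9/25 * v2^2 - 24/25 * (v2 * v3) + 16/25 * v3^2"
          by (simp add: power2_eq_square algebra_simps)
        have "v1^2 + ((3/5) * v2 - (4/5) * v3)^2 = - 1 + (9/25 - 24/25 * (v2 * v3) + 16/25)"
          unfolding ex v1 v2 v3 by simp
        also have "\<dots> = - (24/25) * (v2 * v3)" by simp
        finally have "v1^2 + ((3/5) * v2 - (4/5) * v3)^2 = - (24/25) * (v2 * v3)" .
        moreover have "v2 * v3 \<noteq> 0" using v2 v3 by auto
        ultimately have "v1^2 + ((3/5) * v2 - (4/5) * v3)^2 \<noteq> 0" by simp
        moreover have "(3/5::complex)^2 + (4/5)^2 = 1" by (simp add: power2_eq_square)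
        ultimately show ?thesis by (intro exI[of _ "3/5"] exI[of _ "4/5"]) (simp add: rxm_mult v1_def v2_def v3_def)
      qed
    qed
  qed
  then obtain c0 s0 where cs0: "c0^2 + s0^2 = (1::complex)"
    and nz: "((rxm c0 s0 ** g)$1$3)^2 + ((rxm c0 s0 ** g)$2$3)^2 \<noteq> 0" by blast
  define X where "X = rxm c0 s0"
  define g1 where "g1 = X ** g"
  have X: "X \<in> SO3" unfolding X_def by (rule rxm_SO3[OF cs0])
  have g1: "g1 \<in> SO3" unfolding g1_def by (rule so3_mult[OF X g])
  define w1 w2 w3 where "w1 = g1$1$3" and "w2 = g1$2$3" and "w3 = g1$3$3"
  have wn: "w1^2 + w2^2 + w3^2 = 1" using col3[OF g1] unfolding w1_def w2_def w3_def .
  define r where "r = csqrt (w1^2 + w2^2)"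
  have r2: "r^2 = w1^2 + w2^2" unfolding r_def by simp
  have rnz: "r \<noteq> 0" using nz r2 unfolding w1_def w2_def g1_def X_def by auto
  define Z where "Z = rzm (w2 / r) (w1 / r)"
  have "(w2/r)^2 + (w1/r)^2 = (w1^2 + w2^2) / r^2" by (simp add: power_divide add_divide_distrib add.commute)
  also have "\<dots> = 1" using r2 rnz by (metis divide_self power_not_zero)
  finally have zcs: "(w2/r)^2 + (w1/r)^2 = 1" .
  have Z: "Z \<in> SO3" unfolding Z_def by (rule rzm_SO3[OF zcs])
  define g2 where "g2 = Z ** g1"
  have g2: "g2 \<in> SO3" unfolding g2_def by (rule so3_mult[OF Z g1])
  have g2e: "g2$1$3 = 0" "g2$2$3 = r" "g2$3$3 = w3"
    unfolding g2_def Z_def using rnz r2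
    by (simp_all add: rzm_mult w1_def w2_def w3_def field_simps power2_eq_square)
  define Y where "Y = rxm w3 r"
  have ycs: "w3^2 + r^2 = 1" using wn r2 by (simp add: algebra_simps)
  have Y: "Y \<in> SO3" unfolding Y_def by (rule rxm_SO3[OF ycs])
  define k where "k = Y ** g2"
  have k: "k \<in> SO3" unfolding k_def by (rule so3_mult[OF Y g2])
  have ke: "k$1$3 = 0" "k$2$3 = 0" "k$3$3 = 1"
    unfolding k_def Y_def using g2e ycs by (simp_all add: rxm_mult power2_eq_square algebra_simps)
  obtain kk: "k = rzm (k$1$1) (k$2$1)" "(k$1$1)^2 + (k$2$1)^2 = 1" using k_rz[OF k ke] by blast
  have kI: "k \<in> Inv" using z[OF kk(2)] kk(1) by simp
  have "g = transpose X ** (transpose Z ** (transpose Y ** k))"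
    unfolding k_def g2_def g1_def orth_cancel[OF Y] orth_cancel[OF Z] orth_cancel[OF X] ..
  moreover have "transpose X \<in> Inv" unfolding X_def rxm_transpose using x cs0 by simp
  moreover have "transpose Z \<in> Inv" unfolding Z_def rzm_transpose using z zcs by simp
  moreover have "transpose Y \<in> Inv" unfolding Y_def rxm_transpose using x ycs by simp
  ultimately show ?thesis using cl kI by metis
qed


lemma lift_ag:
  assumes P: "P \<in> alg_gen (R ` S)" and S: "S \<subseteq> {..<N}"
    and h3: "\<forall>k<N. \<forall>w\<in>Wsp ns. J k (complexify_W ns w) = complex_of_real (R k w)"
  shows "\<exists>Q\<in>alg_gen (J ` S). \<forall>w\<in>Wsp ns. Q (complexify_W ns w) = complex_of_real (P w)"
  using P
proof (induction rule: alg_gen.induct)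
  case (ag_const c) show ?case by (intro bexI[of _ "\<lambda>_. complex_of_real c"] alg_gen.ag_const) simp
next
  case (ag_gen f)
  then obtain j where j: "j \<in> S" "f = R j" by blast
  have "J j \<in> alg_gen (J ` S)" using j by (intro alg_gen.ag_gen) auto
  moreover have "\<forall>w\<in>Wsp ns. J j (complexify_W ns w) = complex_of_real (f w)" using h3 j S by auto
  ultimately show ?case by blast
next
  case (ag_add f g)
  then obtain F G where "F \<in> alg_gen (J ` S)" "\<forall>w\<in>Wsp ns. F (complexify_W ns w) = complex_of_real (f w)"
    "G \<in> alg_gen (J ` S)" "\<forall>w\<in>Wsp ns. G (complexify_W ns w) = complex_of_real (g w)" by blast
  thus ?case by (intro bexI[of _ "\<lambda>x. F x + G x"] alg_gen.ag_add) auto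
next
  case (ag_mult f g)
  then obtain F G where "F \<in> alg_gen (J ` S)" "\<forall>w\<in>Wsp ns. F (complexify_W ns w) = complex_of_real (f w)"
    "G \<in> alg_gen (J ` S)" "\<forall>w\<in>Wsp ns. G (complexify_W ns w) = complex_of_real (g w)" by blast
  thus ?case by (intro bexI[of _ "\<lambda>x. F x * G x"] alg_gen.ag_mult) auto
qed

lemma descend_ag:
  assumes P: "P \<in> alg_gen (J ` S)" and S: "S \<subseteq> {..<N}"
    and h3: "\<forall>k<N. \<forall>w\<in>Wsp ns. J k (complexify_W ns w) = complex_of_real (R k w)"
  shows "\<exists>P1\<in>alg_gen (R ` S). \<exists>P2\<in>alg_gen (R ` S). \<forall>w\<in>Wsp ns. P (complexify_W ns w) = Complex (P1 w) (P2 w)"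
  using P
proof (induction rule: alg_gen.induct)
  case (ag_const c)
  show ?case by (intro bexI[of _ "\<lambda>_. Re c"] bexI[of _ "\<lambda>_. Im c"] alg_gen.ag_const) (simp add: complex_eq_iff)
next
  case (ag_gen f)
  then obtain j where j: "j \<in> S" "f = J j" by blast
  have "R j \<in> alg_gen (R ` S)" using j by (intro alg_gen.ag_gen) auto
  moreover have "\<forall>w\<in>Wsp ns. f (complexify_W ns w) = Complex (R j w) ((\<lambda>_. 0) w)"
    using h3 j S by (auto simp: complex_of_real_def)
  moreover have "(\<lambda>_. 0) \<in> alg_gen (R ` S)" by (rule alg_gen.ag_const)
  ultimately show ?case by (intro bexI[of _ "R j"] bexI[of _ "\<lambda>_. 0"]) auto
next
  case (ag_add f g)
  then obtain F1 F2 G1 G2 where F: "F1 \<in> alg_gen (R ` S)" "F2 \<in> alg_gen (R ` S)"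
    "\<forall>w\<in>Wsp ns. f (complexify_W ns w) = Complex (F1 w) (F2 w)"
    and G: "G1 \<in> alg_gen (R ` S)" "G2 \<in> alg_gen (R ` S)"
    "\<forall>w\<in>Wsp ns. g (complexify_W ns w) = Complex (G1 w) (G2 w)" by blast
  show ?case
    by (rule bexI[of _ "\<lambda>x. F1 x + G1 x"], rule bexI[of _ "\<lambda>x. F2 x + G2 x"])
       (use F G in \<open>auto intro: alg_gen.ag_add simp: complex_eq_iff\<close>)
next
  case (ag_mult f g)
  then obtain F1 F2 G1 G2 where F: "F1 \<in> alg_gen (R ` S)" "F2 \<in> alg_gen (R ` S)"
    "\<forall>w\<in>Wsp ns. f (complexify_W ns w) = Complex (F1 w) (F2 w)"
    and G: "G1 \<in> alg_gen (R ` S)" "G2 \<in> alg_gen (R ` S)"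
    "\<forall>w\<in>Wsp ns. g (complexify_W ns w) = Complex (G1 w) (G2 w)" by blast
  have m1: "(\<lambda>x. F1 x * G1 x - F2 x * G2 x) \<in> alg_gen (R ` S)"
    by (intro ag_diff alg_gen.ag_mult F G)
  have m2: "(\<lambda>x. F1 x * G2 x + F2 x * G1 x) \<in> alg_gen (R ` S)"
    by (intro alg_gen.ag_add alg_gen.ag_mult F G)
  show ?case
    by (rule bexI[OF _ m1], rule bexI[OF _ m2]) (use F G in \<open>auto simp: complex_eq_iff\<close>)
qed

lemma pf_closed_in_on:
  assumes "f \<in> alg_gen S" "\<forall>g\<in>S. in_on (Wsp ns) g (PF ns)"
  shows "in_on (Wsp ns) f (PF ns)"
  by (rule ag_poly[OF assms]) (auto intro: polyfuns.intros)

theorem lemma6p14: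
  fixes ns :: "nat list" and N :: nat
    and J :: "nat \<Rightarrow> (nat \<Rightarrow> complex ^ 3 \<Rightarrow> complex) \<Rightarrow> complex"
    and R :: "nat \<Rightarrow> (nat \<Rightarrow> real ^ 3 \<Rightarrow> real) \<Rightarrow> real"
  assumes "minimal_integrity_basis ns N J"
    and "\<forall>k<N. poly_W ns (R k)"
    and "\<forall>k<N. \<forall>w\<in>Wsp ns. J k (complexify_W ns w) = complex_of_real (R k w)"
  shows "minimal_integrity_basis ns N R"
proof -
  note h3 = assms(3)
  have Jib: "\<forall>k<N. inv_W ns (J k) \<and> homog_W ns (J k)"
    and Jgen: "\<forall>F. inv_W ns F \<longrightarrow> in_on (Wsp ns) F (alg_gen (J ` {..<N}))"
    and Jmin: "\<forall>k<N. \<not> in_on (Wsp ns) (J k) (alg_gen (J ` ({..<N} - {k})))"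
    using assms(1) unfolding minimal_integrity_basis_def integrity_basis_def by auto
  have Rinv: "inv_W ns (R k)" if k: "k < N" for k
    unfolding inv_W_def
  proof (intro conjI ballI)
    show "poly_W ns (R k)" using assms(2) k by blast
    fix g :: "real^3^3" and w :: "nat \<Rightarrow> real^3 \<Rightarrow> real" assume g: "g \<in> SO3" and w: "w \<in> Wsp ns"
    have gw: "wact g w \<in> Wsp ns" by (rule Wsp_wact[OF g w])
    have "complex_of_real (R k (wact g w)) = J k (complexify_W ns (wact g w))" using h3 k gw by auto
    also have "\<dots> = J k (wact (gC g) (complexify_W ns w))" unfolding cW_wact[OF g w] ..
    also have "\<dots> = J k (complexify_W ns w)"
      using Jib k gC_SO3[OF g] cW_Wsp[OF w] unfolding inv_W_def by blast
    also have "\<dots> = complex_of_real (R k w)" using h3 k w by auto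
    finally show "R k (wact g w) = R k w" by simp
  qed
  have Rhom: "homog_W ns (R k)" if k: "k < N" for k
  proof -
    obtain d where d: "\<forall>t. \<forall>x\<in>Wsp ns. J k (wscale t x) = t ^ d * J k x"
      using Jib k unfolding homog_W_def by blast
    have "R k (wscale t w) = t ^ d * R k w" if w: "w \<in> Wsp ns" for t :: real and w :: "nat \<Rightarrow> real^3 \<Rightarrow> real"
    proof -
      have tw: "wscale t w \<in> Wsp ns" by (rule Wsp_scale[OF w])
      have cs: "complexify_W ns (wscale t w) = wscale (complex_of_real t) (complexify_W ns w)"
        using cW_lin[OF w w, of t 0] by (simp add: wscale_0_add)
      have "complex_of_real (R k (wscale t w)) = J k (complexify_W ns (wscale t w))" using h3 k tw by auto
      also have "\<dots> = complex_of_real t ^ d * J k (complexify_W ns w)" unfolding cs using d cW_Wsp[OF w] by blast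
      also have "\<dots> = complex_of_real (t ^ d * R k w)" using h3 k w by auto
      finally show ?thesis by (simp only: of_real_eq_iff)
    qed
    thus ?thesis unfolding homog_W_def by blast
  qed
  have Rgen: "in_on (Wsp ns) F (alg_gen (R ` {..<N}))" if F: "inv_W ns F" for F
  proof -
    obtain G where G: "G \<in> PF ns" "\<forall>w\<in>Wsp ns. F w = G w" using F unfolding inv_W_def poly_W_def in_on_def by blast
    have Finv: "\<forall>g\<in>SO3. \<forall>w\<in>Wsp ns. F (wact g w) = F w" using F unfolding inv_W_def by blast
    obtain H where H: "H \<in> PF ns" "\<forall>w\<in>Wsp ns. H (complexify_W ns w) = complex_of_real (G w)"
      using pf_extend[OF G(1)] by blast
    have HF: "H (complexify_W ns w) = complex_of_real (F w)" if "w \<in> Wsp ns" for w :: "nat \<Rightarrow> real^3 \<Rightarrow> real" using H G that by simp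
    have RI: "\<forall>g\<in>SO3. \<forall>x\<in>Wsp ns. H (wact (gC g) x) = H x"
    proof (intro ballI)
      fix g :: "real^3^3" and x :: "nat \<Rightarrow> complex^3 \<Rightarrow> complex" assume g: "g \<in> SO3" and x: "x \<in> Wsp ns"
      show "H (wact (gC g) x) = H x"
      proof (rule inv_real_rot[OF H(1) _ g x])
        fix g' :: "real^3^3" and w :: "nat \<Rightarrow> real^3 \<Rightarrow> real" assume g': "g' \<in> SO3" and w: "w \<in> Wsp ns"
        have gw: "wact g' w \<in> Wsp ns" by (rule Wsp_wact[OF g' w])
        show "H (complexify_W ns (wact g' w)) = H (complexify_W ns w)"
          using HF[OF gw] HF[OF w] Finv g' w by simp
      qed
    qed
    define Inv where "Inv = {g. g \<in> SO3 \<and> (\<forall>x\<in>Wsp ns. H (wact g x) = H x)}"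
    have allinv: "g \<in> Inv" if g: "g \<in> SO3" for g :: "complex^3^3"
    proof (rule so3_gen[OF _ _ _ g])
      fix a b assume a: "a \<in> Inv" and b: "b \<in> Inv"
      show "a ** b \<in> Inv" unfolding Inv_def
      proof (intro CollectI conjI ballI)
        show "a ** b \<in> SO3" using a b so3_mult unfolding Inv_def by blast
        fix x :: "nat \<Rightarrow> complex^3 \<Rightarrow> complex" assume x: "x \<in> Wsp ns"
        have aS: "a \<in> SO3" and bS: "b \<in> SO3" using a b unfolding Inv_def by auto
        have "H (wact (a ** b) x) = H (wact a (wact b x))" using wact_comp[OF aS bS, of x] by simp
        also have "\<dots> = H (wact b x)" using a b x Wsp_wact unfolding Inv_def by blast
        also have "\<dots> = H x" using b x unfolding Inv_def by blast
        finally show "H (wact (a ** b) x) = H x" .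
      qed
    next
      fix c s :: complex assume "c^2 + s^2 = 1"
      thus "rzm c s \<in> Inv" unfolding Inv_def using rzm_SO3 inv_rz[OF H(1) RI] by blast
    next
      fix c s :: complex assume "c^2 + s^2 = 1"
      thus "rxm c s \<in> Inv" unfolding Inv_def using rxm_SO3 inv_rx[OF H(1) RI] by blast
    qed
    have "inv_W ns H" unfolding inv_W_def poly_W_def in_on_def
      using H(1) allinv unfolding Inv_def by blast
    then obtain P where P: "P \<in> alg_gen (J ` {..<N})" "\<forall>x\<in>Wsp ns. H x = P x"
      using Jgen unfolding in_on_def by blast
    obtain P1 P2 where P12: "P1 \<in> alg_gen (R ` {..<N})" "P2 \<in> alg_gen (R ` {..<N})"
      "\<forall>w\<in>Wsp ns. P (complexify_W ns w) = Complex (P1 w) (P2 w)"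
      using descend_ag[OF P(1) _ h3] by blast
    have "F w = P1 w" if w: "w \<in> Wsp ns" for w :: "nat \<Rightarrow> real^3 \<Rightarrow> real"
    proof -
      have "complex_of_real (F w) = Complex (P1 w) (P2 w)" using HF[OF w] P(2) P12(3) cW_Wsp[OF w] w by metis
      thus ?thesis by (simp add: complex_eq_iff)
    qed
    thus ?thesis unfolding in_on_def using P12(1) by blast
  qed
  have Rmin: "\<not> in_on (Wsp ns) (R k) (alg_gen (R ` ({..<N} - {k})))" if k: "k < N" for k
  proof
    assume "in_on (Wsp ns) (R k) (alg_gen (R ` ({..<N} - {k})))"
    then obtain P where P: "P \<in> alg_gen (R ` ({..<N} - {k}))" "\<forall>w\<in>Wsp ns. R k w = P w"
      unfolding in_on_def by blast
    obtain Q where Q: "Q \<in> alg_gen (J ` ({..<N} - {k}))" "\<forall>w\<in>Wsp ns. Q (complexify_W ns w) = complex_of_real (P w)"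
      using lift_ag[OF P(1) _ h3] by blast
    have Jpoly: "\<forall>g\<in>J ` ({..<N} - {k}). in_on (Wsp ns) g (PF ns)"
      using Jib unfolding inv_W_def poly_W_def by auto
    obtain HQ where HQ: "HQ \<in> PF ns" "\<forall>x\<in>Wsp ns. Q x = HQ x"
      using pf_closed_in_on[OF Q(1) Jpoly] unfolding in_on_def by blast
    obtain HJ where HJ: "HJ \<in> PF ns" "\<forall>x\<in>Wsp ns. J k x = HJ x"
      using Jib k unfolding inv_W_def poly_W_def in_on_def by blast
    have Dp: "(\<lambda>x. HJ x - HQ x) \<in> PF ns" by (rule pf_diff[OF HJ(1) HQ(1)])
    have "\<forall>w\<in>Wsp ns. HJ (complexify_W ns w) - HQ (complexify_W ns w) = 0"
    proof
      fix w :: "nat \<Rightarrow> real^3 \<Rightarrow> real" assume w: "w \<in> Wsp ns"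
      have cw: "complexify_W ns w \<in> Wsp ns" by (rule cW_Wsp[OF w])
      have "HJ (complexify_W ns w) = complex_of_real (R k w)" using HJ(2) cw h3 k w by metis
      moreover have "HQ (complexify_W ns w) = complex_of_real (P w)" using HQ(2) cw Q(2) w by metis
      ultimately show "HJ (complexify_W ns w) - HQ (complexify_W ns w) = 0" using P(2) w by simp
    qed
    from pf_real_zero[OF Dp this] have "\<forall>x\<in>Wsp ns. J k x = Q x" using HJ(2) HQ(2) by simp
    hence "in_on (Wsp ns) (J k) (alg_gen (J ` ({..<N} - {k})))" unfolding in_on_def using Q(1) by blast
    thus False using Jmin k by blast
  qed
  show ?thesis unfolding minimal_integrity_basis_def integrity_basis_def
    using Rinv Rhom Rgen Rmin by blast
qed


end
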